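(* Let $F$ be a non-normable locally convex space and $E,G\neq\{0\}$ locally convex spaces over $\mathbb{K}$. Equip $L(F,G)$, $L(E,F)$ and $L(E,G)$ with arbitrary locally convex vector topologies such that, for some $\lambda\in E'$ and $x\in E$ with $\lambda(x)\neq 0$, the maps $F\to L(E,F)$, $y\mapsto y\otimes\lambda$, and $L(E,G)\to G$, $A\mapsto A(x)$, are continuous, where $(y\otimes\lambda)(z)=\lambda(z)y$. Then the composition map $L(F,G)\times L(E,F)\to L(E,G)$, $(A,B)\mapsto A\circ B$, is discontinuous.
   Context: $L(E,F)$ denotes the space of continuous linear maps $E\to F$ and $E'=L(E,\mathbb{K})$. It may be used that for a non-normable locally convex space $F$, the evaluation map $F'\times F\to\mathbb{K}$ is discontinuous for every locally convex vector topology on $F'$. *)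

theory Defs
  imports "HOL-Analysis.Analysis"
begin

text \<open>Scalars: a type 'k of class real_normed_field (i.e. the real or complex numbers).
  A vector space is given by a type with addition and an explicit scalar multiplication;
  subspaces of function spaces are given by a carrier set with explicit operations.\<close>

definition convex_in :: "('v \<Rightarrow> 'v \<Rightarrow> 'v) \<Rightarrow> ('k::real_normed_field \<Rightarrow> 'v \<Rightarrow> 'v) \<Rightarrow> 'v set \<Rightarrow> bool" where
  "convex_in add sc U \<longleftrightarrow>
     (\<forall>x\<in>U. \<forall>y\<in>U. \<forall>t::real. 0 \<le> t \<and> t \<le> 1 \<longrightarrow> add (sc (of_real t) x) (sc (of_real (1 - t)) y) \<in> U)"

text \<open>Not necessarily Hausdorff.\<close>
definition lc_vector_topology ::
  "'v set \<Rightarrow> ('v \<Rightarrow> 'v \<Rightarrow> 'v) \<Rightarrow> ('k::real_normed_field \<Rightarrow> 'v \<Rightarrow> 'v) \<Rightarrow> 'v topology \<Rightarrow> bool" where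
  "lc_vector_topology S add sc T \<longleftrightarrow>
     S \<noteq> {} \<and> (\<forall>x\<in>S. \<forall>y\<in>S. add x y \<in> S) \<and> (\<forall>c. \<forall>x\<in>S. sc c x \<in> S) \<and>
     topspace T = S \<and>
     continuous_map (prod_topology T T) T (\<lambda>(x, y). add x y) \<and>
     continuous_map (prod_topology (euclidean :: 'k topology) T) T (\<lambda>(c, x). sc c x) \<and>
     (\<forall>U x. openin T U \<and> x \<in> U \<longrightarrow> (\<exists>V. openin T V \<and> convex_in add sc V \<and> x \<in> V \<and> V \<subseteq> U))"

definition lcs :: "('k::real_normed_field \<Rightarrow> 'v::ab_group_add \<Rightarrow> 'v) \<Rightarrow> 'v topology \<Rightarrow> bool" where
  "lcs sc T \<longleftrightarrow> vector_space sc \<and> lc_vector_topology UNIV (+) sc T \<and> Hausdorff_space T"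

definition is_norm :: "('k::real_normed_field \<Rightarrow> 'v::ab_group_add \<Rightarrow> 'v) \<Rightarrow> ('v \<Rightarrow> real) \<Rightarrow> bool" where
  "is_norm sc N \<longleftrightarrow> (\<forall>x. 0 \<le> N x) \<and> (\<forall>x. N x = 0 \<longrightarrow> x = 0) \<and>
     (\<forall>c x. N (sc c x) = norm c * N x) \<and> (\<forall>x y. N (x + y) \<le> N x + N y)"

definition norm_topology :: "('v::ab_group_add \<Rightarrow> real) \<Rightarrow> 'v topology" where
  "norm_topology N = topology (\<lambda>U. \<forall>x\<in>U. \<exists>e>0. \<forall>y. N (y - x) < e \<longrightarrow> y \<in> U)"

definition normable :: "('k::real_normed_field \<Rightarrow> 'v::ab_group_add \<Rightarrow> 'v) \<Rightarrow> 'v topology \<Rightarrow> bool" where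
  "normable sc T \<longleftrightarrow> (\<exists>N. is_norm sc N \<and> T = norm_topology N)"

definition cont_lin :: "('k::real_normed_field \<Rightarrow> 'e::ab_group_add \<Rightarrow> 'e) \<Rightarrow> 'e topology \<Rightarrow>
    ('k \<Rightarrow> 'f::ab_group_add \<Rightarrow> 'f) \<Rightarrow> 'f topology \<Rightarrow> ('e \<Rightarrow> 'f) set" where
  "cont_lin sE TE sF TF = {A. Vector_Spaces.linear sE sF A \<and> continuous_map TE TF A}"

definition dual :: "('k::real_normed_field \<Rightarrow> 'e::ab_group_add \<Rightarrow> 'e) \<Rightarrow> 'e topology \<Rightarrow> ('e \<Rightarrow> 'k) set" where
  "dual sE TE = cont_lin sE TE (*) euclidean"

definition fadd :: "('e \<Rightarrow> 'f::plus) \<Rightarrow> ('e \<Rightarrow> 'f) \<Rightarrow> 'e \<Rightarrow> 'f" where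
  "fadd A B = (\<lambda>z. A z + B z)"

definition fscale :: "('k \<Rightarrow> 'f \<Rightarrow> 'f) \<Rightarrow> 'k \<Rightarrow> ('e \<Rightarrow> 'f) \<Rightarrow> 'e \<Rightarrow> 'f" where
  "fscale sc c A = (\<lambda>z. sc c (A z))"

end

theory Submission
  imports Defs "HOL-Computational_Algebra.Fundamental_Theorem_Algebra"
begin

definition ev :: "real poly \<Rightarrow> 'a::real_normed_field \<Rightarrow> 'a" where
  "ev p x = poly (map_poly of_real p) x"

lemma map_poly_of_real_add:
  "map_poly (of_real::real\<Rightarrow>'a::real_normed_field) (p + q) = map_poly of_real p + map_poly of_real q"
  by (rule poly_eqI) (simp add: coeff_map_poly)

lemma map_poly_of_real_mult:
  "map_poly (of_real::real\<Rightarrow>'a::real_normed_field) (p * q) = map_poly of_real p * map_poly of_real q"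
  by (rule poly_eqI) (simp add: coeff_map_poly coeff_mult of_real_sum)

lemma ev_add: "ev (p + q) x = ev p x + ev q x"
  by (simp add: ev_def map_poly_of_real_add)

lemma ev_mult: "ev (p * q) x = ev p x * ev q x"
  by (simp add: ev_def map_poly_of_real_mult)

lemma ev_power: "ev (p ^ n) x = ev p x ^ n"
  by (induction n) (simp_all add: ev_mult, simp add: ev_def)

lemma ev_const: "ev [:c:] x = of_real c"
  by (simp add: ev_def map_poly_pCons)

lemma ev_real: "ev p (of_real t :: 'a::real_normed_field) = of_real (poly p t)"
  by (induction p) (simp_all add: ev_def map_poly_pCons)

definition gq :: "complex \<Rightarrow> real poly" where
  "gq z = [:(cmod z)^2, -2 * Re z, 1:]"

lemma ev_gq: "ev (gq z) x = x * x - of_real (2 * Re z) * x + of_real ((cmod z)^2)"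
  by (simp add: ev_def gq_def map_poly_pCons algebra_simps)

lemma poly_gq: "poly (gq z) x = (x - Re z)^2 + (Im z)^2"
  unfolding gq_def by (simp add: cmod_power2) (simp add: power2_eq_square algebra_simps)

lemma ev_gq_self: "ev (gq z) z = 0"
  unfolding ev_gq cmod_power2 by (simp add: complex_eq_iff power2_eq_square algebra_simps)

lemma gq_nz: "gq z \<noteq> 0" by (simp add: gq_def)
lemma degree_gq: "degree (gq z) = 2" by (simp add: gq_def)
lemma lead_coeff_gq: "lead_coeff (gq z) = 1" by (simp add: gq_def)

lemma gq_dvd:
  fixes H :: "real poly" and \<alpha> :: complex
  assumes "Im \<alpha> \<noteq> 0" "ev H \<alpha> = 0"
  shows "H = gq \<alpha> * (H div gq \<alpha>)"
proof -
  define R where "R = H mod gq \<alpha>"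
  define Q where "Q = H div gq \<alpha>"
  have HQR: "H = gq \<alpha> * Q + R" unfolding Q_def R_def by (simp add: mult.commute)
  have "ev H \<alpha> = ev (gq \<alpha>) \<alpha> * ev Q \<alpha> + ev R \<alpha>"
    by (subst HQR) (simp add: ev_add ev_mult)
  hence R0: "ev R \<alpha> = 0" using assms(2) by (simp add: ev_gq_self)
  have dR: "degree R \<le> 1"
    using degree_mod_less[OF gq_nz, of H \<alpha>] unfolding R_def degree_gq by auto
  have Rform: "R = [:coeff R 0, coeff R 1:]"
  proof (rule poly_eqI)
    fix n show "coeff R n = coeff [:coeff R 0, coeff R 1:] n"
      using dR by (cases n; cases "n - 1") (auto simp: coeff_eq_0)
  qed
  have "ev R \<alpha> = of_real (coeff R 0) + \<alpha> * of_real (coeff R 1)"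
    by (subst Rform) (simp add: ev_def map_poly_pCons)
  with R0 have e: "of_real (coeff R 0) + \<alpha> * of_real (coeff R 1) = 0" by simp
  have "Im (of_real (coeff R 0) + \<alpha> * of_real (coeff R 1)) = Im \<alpha> * coeff R 1" by simp
  with e have "Im \<alpha> * coeff R 1 = 0" by simp
  hence c1: "coeff R 1 = 0" using assms(1) by simp
  with e have "coeff R 0 = 0" by simp
  with c1 have "R = 0" by (subst Rform) simp
  with HQR show ?thesis unfolding Q_def by simp
qed

lemma ev_lower:
  fixes a :: "'a::real_normed_field"
  assumes m: "0 \<le> m" "\<forall>z. m \<le> norm (ev (gq z) a)"
  shows "(\<forall>x. poly H x \<noteq> 0) \<Longrightarrow> \<bar>lead_coeff H\<bar> * m ^ (degree H div 2) \<le> norm (ev H a)"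
proof (induction "degree H" arbitrary: H rule: less_induct)
  case less
  show ?case
  proof (cases "degree H = 0")
    case True
    then obtain c where c: "H = [:c:]" by (rule degree_eq_zeroE)
    show ?thesis by (simp add: c ev_const)
  next
    case False
    have dm: "degree (map_poly complex_of_real H) = degree H"
      by (rule degree_map_poly) simp
    have "\<not> (\<exists>a l. a \<noteq> 0 \<and> l = 0 \<and> map_poly complex_of_real H = pCons a l)"
      using False dm by auto
    then obtain \<alpha> where "poly (map_poly complex_of_real H) \<alpha> = 0"
      using fundamental_theorem_of_algebra_alt by blast
    hence r: "ev H \<alpha> = 0" by (simp add: ev_def)
    have Im: "Im \<alpha> \<noteq> 0"
    proof
      assume "Im \<alpha> = 0"
      hence "\<alpha> = of_real (Re \<alpha>)" by (simp add: complex_eq_iff)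
      with r have "of_real (poly H (Re \<alpha>)) = (0::complex)" by (metis ev_real)
      with less.prems show False by simp
    qed
    define Q where "Q = H div gq \<alpha>"
    have HQ: "H = gq \<alpha> * Q" unfolding Q_def by (rule gq_dvd[OF Im r])
    have H0: "H \<noteq> 0" using less.prems by auto
    hence Q0: "Q \<noteq> 0" using HQ by auto
    have dH: "degree H = 2 + degree Q" using HQ gq_nz Q0 degree_mult_eq degree_gq by metis
    have lH: "lead_coeff H = lead_coeff Q" using HQ by (simp add: lead_coeff_mult lead_coeff_gq)
    have Qnr: "\<forall>x. poly Q x \<noteq> 0" using less.prems HQ by (metis mult_zero_right poly_mult)
    have IH: "\<bar>lead_coeff Q\<bar> * m ^ (degree Q div 2) \<le> norm (ev Q a)"
      using less.hyps[of Q] dH Qnr by simp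
    have "norm (ev H a) = norm (ev (gq \<alpha>) a) * norm (ev Q a)"
      by (subst HQ) (simp add: ev_mult norm_mult)
    moreover have "degree H div 2 = Suc (degree Q div 2)" using dH by simp
    moreover have "m \<le> norm (ev (gq \<alpha>) a)" using m by simp
    moreover have "m * (\<bar>lead_coeff Q\<bar> * m ^ (degree Q div 2)) \<le> norm (ev (gq \<alpha>) a) * norm (ev Q a)"
      using IH m by (intro mult_mono) auto
    ultimately show ?thesis using lH by (simp add: mult.commute mult.left_commute)
  qed
qed


lemma step_lemma:
  fixes a :: "'a::real_normed_field"
  assumes mpos: "0 < m" and mmin: "\<forall>z. m \<le> norm (ev (gq z) a)" and z0: "norm (ev (gq z0) a) = m"
  shows "norm (ev (gq (Complex (Re z0) (sqrt ((Im z0)^2 + m/2)))) a) = m"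
proof -
  define \<epsilon> where "\<epsilon> = m / 2"
  have epos: "0 < \<epsilon>" using mpos by (simp add: \<epsilon>_def)
  define s where "s = sqrt ((Im z0)^2 + \<epsilon>)"
  have spos: "0 < s" unfolding s_def using epos by (simp add: add_nonneg_pos)
  have s2: "s^2 = (Im z0)^2 + \<epsilon>" unfolding s_def using epos by simp
  define z1 where "z1 = Complex (Re z0) s"
  have gz1: "ev (gq z0) z1 = - of_real \<epsilon>"
    unfolding ev_gq cmod_power2 z1_def using s2
    by (simp add: complex_eq_iff power2_eq_square algebra_simps)
  have bound: "norm (ev (gq z1) a) \<le> m + m / 2^n" if n: "odd n" for n
  proof -
    define G where "G = gq z0 ^ n + [:\<epsilon>^n:]"
    have "ev G z1 = (- of_real \<epsilon>)^n + of_real (\<epsilon>^n)"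
      by (simp add: G_def ev_add ev_power ev_const gz1)
    also have "\<dots> = 0" using n by (simp add: power_minus_odd)
    finally have G1: "ev G z1 = 0" .
    define Q where "Q = G div gq z1"
    have GQ: "G = gq z1 * Q" unfolding Q_def by (rule gq_dvd) (use spos G1 in \<open>auto simp: z1_def\<close>)
    have Gpos: "poly G x \<noteq> 0" for x
    proof -
      have "0 \<le> poly (gq z0) x" by (simp add: poly_gq)
      hence "0 \<le> poly (gq z0) x ^ n" by simp
      moreover have "0 < \<epsilon>^n" using epos by simp
      ultimately show ?thesis by (simp add: G_def)
    qed
    have n1: "n \<ge> 1" using n by (cases n) auto
    have dpow: "degree (gq z0 ^ n) = 2 * n" using degree_power_eq[OF gq_nz] degree_gq by (simp add: mult.commute)
    have dG: "degree G = 2 * n" unfolding G_def using dpow n1 by (subst degree_add_eq_left) auto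
    have "lead_coeff ([:\<epsilon>^n:] + gq z0 ^ n) = lead_coeff (gq z0 ^ n)"
      by (rule lead_coeff_add_le) (use dpow n1 in simp)
    hence lG: "lead_coeff G = 1" unfolding G_def by (simp add: add.commute lead_coeff_power lead_coeff_gq)
    have G0: "G \<noteq> 0" using Gpos by auto
    hence Q0: "Q \<noteq> 0" using GQ by auto
    have dQ: "degree Q = 2 * n - 2" using GQ gq_nz Q0 degree_mult_eq degree_gq dG by (metis add_diff_cancel_left')
    have lQ: "lead_coeff Q = 1" using GQ lG by (simp add: lead_coeff_mult lead_coeff_gq)
    have Qnr: "\<forall>x. poly Q x \<noteq> 0" using Gpos GQ by (metis mult_zero_right poly_mult)
    have low: "m ^ (n - 1) \<le> norm (ev Q a)"
    proof -
      have "(2 * n - 2) div 2 = n - 1" by simp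
      thus ?thesis using ev_lower[OF less_imp_le[OF mpos] mmin Qnr] dQ lQ by simp
    qed
    have "norm (ev G a) = norm (ev (gq z1) a) * norm (ev Q a)"
      by (subst GQ) (simp add: ev_mult norm_mult)
    hence lowG: "norm (ev (gq z1) a) * m ^ (n - 1) \<le> norm (ev G a)"
      using low by (simp add: mult_left_mono)
    have "norm (ev G a) = norm ((ev (gq z0) a)^n + of_real (\<epsilon>^n))"
      by (simp add: G_def ev_add ev_power ev_const)
    also have "\<dots> \<le> norm (ev (gq z0) a)^n + \<epsilon>^n"
      using epos by (metis abs_of_pos norm_of_real norm_power norm_triangle_ineq zero_less_power)
    also have "\<dots> = m^n + \<epsilon>^n" using z0 by simp
    finally have "norm (ev (gq z1) a) * m ^ (n - 1) \<le> m^n + \<epsilon>^n" using lowG by linarith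
    moreover have "m^n + \<epsilon>^n = (m + m / 2^n) * m^(n-1)"
    proof -
      have "m^n = m * m^(n-1)" using n1 by (metis power_eq_if not_one_le_zero)
      moreover have "\<epsilon>^n = m^n / 2^n" by (simp add: \<epsilon>_def power_divide)
      ultimately show ?thesis by (simp add: algebra_simps)
    qed
    ultimately have "norm (ev (gq z1) a) * m ^ (n - 1) \<le> (m + m / 2^n) * m^(n-1)" by simp
    thus ?thesis using mpos by simp
  qed
  have "norm (ev (gq z1) a) \<le> m"
  proof (rule ccontr)
    assume nle: "\<not> ?thesis"
    define \<delta> where "\<delta> = norm (ev (gq z1) a) - m"
    have dpos: "0 < \<delta>" using nle by (simp add: \<delta>_def)
    obtain k :: nat where k: "m / \<delta> < real k" using reals_Archimedean2 by blast
    define n where "n = 2 * k + 1"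
    have "real k < 2 ^ n"
    proof -
      have "k < 2 ^ n" unfolding n_def by (metis less_exp le_less_trans less_imp_le_nat linorder_not_le power_increasing_iff one_less_numeral_iff semiring_norm(76) less_add_one trans_less_add1 mult_2 le_add1)
      thus ?thesis by (metis of_nat_less_iff of_nat_numeral of_nat_power)
    qed
    hence "m / \<delta> < 2 ^ n" using k by linarith
    hence "m < \<delta> * 2 ^ n" using dpos by (simp add: divide_less_eq mult.commute)
    hence "m / 2^n < \<delta>" by (simp add: divide_less_eq mult.commute)
    moreover have "norm (ev (gq z1) a) \<le> m + m / 2^n" using bound[of n] by (simp add: n_def)
    ultimately show False unfolding \<delta>_def by linarith
  qed
  with mmin show ?thesis unfolding z1_def s_def \<epsilon>_def by (meson antisym)
qed

lemma tri3: "norm (w::'a::real_normed_vector) \<le> norm (x - y + w) + norm x + norm y"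
proof -
  have "norm w = norm ((x - y + w) + (y - x))" by (simp add: algebra_simps)
  also have "\<dots> \<le> norm (x - y + w) + norm (y - x)" by (rule norm_triangle_ineq)
  also have "norm (y - x) \<le> norm y + norm x" by (rule norm_triangle_ineq4)
  finally show ?thesis by simp
qed

lemma exists_root:
  fixes a :: "'a::real_normed_field"
  shows "\<exists>z. ev (gq z) a = 0"
proof -
  define \<phi> where "\<phi> z = norm (ev (gq z) a)" for z
  have coer: "(cmod z)^2 - 2 * cmod z * norm a - (norm a)^2 \<le> \<phi> z" for z
  proof -
    have "norm (of_real ((cmod z)^2) :: 'a) \<le> \<phi> z + norm (a * a) + norm (of_real (2 * Re z) * a)"
      unfolding \<phi>_def ev_gq by (rule tri3)
    moreover have "norm (of_real ((cmod z)^2) :: 'a) = (cmod z)^2" by (simp only: norm_of_real) simp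
    moreover have "norm (a * a) = (norm a)^2" by (simp add: norm_mult power2_eq_square)
    moreover have "norm (of_real (2 * Re z) * a) \<le> 2 * cmod z * norm a"
    proof -
      have "norm (of_real (2 * Re z) * a) = 2 * \<bar>Re z\<bar> * norm a" by (simp add: norm_mult)
      also have "\<dots> \<le> 2 * cmod z * norm a" using abs_Re_le_cmod[of z] by (simp add: mult_right_mono)
      finally show ?thesis .
    qed
    ultimately show ?thesis by linarith
  qed
  define R where "R = 3 * norm a + \<phi> 0 + 1"
  have \<phi>0: "0 \<le> \<phi> 0" by (simp add: \<phi>_def)
  have far: "\<phi> 0 < \<phi> z" if "R < cmod z" for z
  proof -
    define c where "c = cmod z"
    have c1: "1 \<le> c" "norm a \<le> c" using that \<phi>0 norm_ge_zero[of a] unfolding R_def c_def by linarith+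
    have "norm a + \<phi> 0 + 1 < c - 2 * norm a" using that by (simp add: R_def c_def)
    hence "c * (norm a + \<phi> 0 + 1) \<le> c * (c - 2 * norm a)" using c1 by (intro mult_left_mono) auto
    moreover have "(norm a)^2 \<le> c * norm a" using c1 by (simp add: power2_eq_square mult_right_mono)
    moreover have "\<phi> 0 + 1 \<le> c * (\<phi> 0 + 1)" using c1 \<phi>0 by (simp add: mult_right_mono[of 1 c, simplified])
    ultimately have "(norm a)^2 + \<phi> 0 < c * (c - 2 * norm a)" by (simp add: algebra_simps)
    hence "\<phi> 0 < c^2 - 2 * c * norm a - (norm a)^2" by (simp add: power2_eq_square algebra_simps)
    with coer[of z] show ?thesis unfolding c_def by linarith
  qed
  have cont: "continuous_on UNIV \<phi>"
    unfolding \<phi>_def ev_gq by (intro continuous_intros)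
  have Rpos: "0 \<le> R" using \<phi>0 norm_ge_zero[of a] unfolding R_def by linarith
  have "\<exists>x\<in>cball 0 R. \<forall>y\<in>cball 0 R. \<phi> x \<le> \<phi> y"
    by (rule continuous_attains_inf) (use Rpos in \<open>auto intro: continuous_on_subset[OF cont]\<close>)
  then obtain z0 where z0: "z0 \<in> cball 0 R" "\<forall>y\<in>cball 0 R. \<phi> z0 \<le> \<phi> y" by blast
  have gmin: "\<phi> z0 \<le> \<phi> z" for z
  proof (cases "z \<in> cball 0 R")
    case True thus ?thesis using z0 by auto
  next
    case False
    hence "R < cmod z" by (simp add: dist_norm)
    hence "\<phi> 0 < \<phi> z" by (rule far)
    moreover have "\<phi> z0 \<le> \<phi> 0" using z0 Rpos by auto
    ultimately show ?thesis by simp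
  qed
  define m where "m = \<phi> z0"
  show ?thesis
  proof (cases "m = 0")
    case True thus ?thesis unfolding m_def \<phi>_def by auto
  next
    case False
    hence mpos: "0 < m" by (simp add: m_def \<phi>_def)
    have mmin: "\<forall>z. m \<le> norm (ev (gq z) a)" using gmin unfolding m_def \<phi>_def by auto
    have iter: "\<exists>z. \<phi> z = m \<and> real k * (m/2) \<le> (cmod z)^2" for k
    proof (induction k)
      case 0 show ?case by (rule exI[of _ z0]) (simp add: m_def)
    next
      case (Suc k)
      then obtain z where z: "\<phi> z = m" "real k * (m/2) \<le> (cmod z)^2" by blast
      define z' where "z' = Complex (Re z) (sqrt ((Im z)^2 + m/2))"
      have "\<phi> z' = m" unfolding z'_def \<phi>_def
        by (rule step_lemma[OF mpos mmin]) (use z in \<open>simp add: \<phi>_def\<close>)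
      moreover have "(cmod z')^2 = (cmod z)^2 + m/2"
        unfolding z'_def cmod_power2 using mpos by simp
      ultimately show ?case using z by (intro exI[of _ z']) (simp add: algebra_simps)
    qed
    obtain k :: nat where k: "R^2 / (m/2) < real k" using reals_Archimedean2 by blast
    then obtain z where z: "\<phi> z = m" "real k * (m/2) \<le> (cmod z)^2" using iter by blast
    have "R^2 < real k * (m/2)" using k mpos by (simp add: divide_less_eq)
    hence "R^2 < (cmod z)^2" using z by linarith
    hence "R < cmod z" using Rpos by (meson norm_ge_zero power_less_imp_less_base)
    hence "\<phi> 0 < \<phi> z" by (rule far)
    moreover have "\<phi> z0 \<le> \<phi> 0" by (rule gmin)
    ultimately show ?thesis using z unfolding m_def by simp
  qed
qed


lemma k_cases:
  "(\<forall>a::'a::real_normed_field. \<exists>r. a = of_real r) \<or>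
   (\<exists>j::'a. j * j = -1 \<and> (\<forall>a. \<exists>r s. a = of_real r + of_real s * j))"
proof (cases "\<exists>j::'a. j * j = -1")
  case True
  then obtain j :: 'a where j: "j * j = -1" by blast
  have "\<exists>r s. a = of_real r + of_real s * j" for a :: 'a
  proof -
    obtain z where z: "ev (gq z) a = 0" using exists_root by blast
    define x where "x = Re z"
    define y where "y = Im z"
    have e0: "a * a - of_real (2 * x) * a + of_real (x^2 + y^2) = 0"
      using z unfolding ev_gq cmod_power2 x_def y_def .
    have "(a - of_real x) * (a - of_real x) + of_real y * of_real y = a * a - of_real (2 * x) * a + of_real (x^2 + y^2)"
      by (simp add: algebra_simps power2_eq_square)
    hence "(a - of_real x) * (a - of_real x) = - (of_real y * of_real y)" using e0 by (simp add: eq_neg_iff_add_eq_0)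
    hence "(a - of_real x)^2 = (of_real y * j)^2"
    proof -
      have "(of_real y * j)^2 = (j * j) * (of_real y * of_real y)" by (simp add: power2_eq_square algebra_simps)
      thus ?thesis using \<open>(a - of_real x) * (a - of_real x) = - (of_real y * of_real y)\<close> j by (simp add: power2_eq_square)
    qed
    hence "a - of_real x = of_real y * j \<or> a - of_real x = - (of_real y * j)"
      by (simp add: power2_eq_iff)
    thus ?thesis
    proof
      assume "a - of_real x = of_real y * j"
      thus ?thesis by (intro exI[of _ x] exI[of _ y]) (simp add: algebra_simps)
    next
      assume "a - of_real x = - (of_real y * j)"
      thus ?thesis by (intro exI[of _ x] exI[of _ "-y"]) (simp add: algebra_simps)
    qed
  qed
  thus ?thesis using j by blast
next
  case False
  have "\<exists>r. a = of_real r" for a :: 'a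
  proof -
    obtain z where z: "ev (gq z) a = 0" using exists_root by blast
    define x where "x = Re z"
    define y where "y = Im z"
    have e0: "a * a - of_real (2 * x) * a + of_real (x^2 + y^2) = 0"
      using z unfolding ev_gq cmod_power2 x_def y_def .
    have "(a - of_real x) * (a - of_real x) + of_real y * of_real y = a * a - of_real (2 * x) * a + of_real (x^2 + y^2)"
      by (simp add: algebra_simps power2_eq_square)
    hence e: "(a - of_real x) * (a - of_real x) = - (of_real y * of_real y)" using e0 by (simp add: eq_neg_iff_add_eq_0)
    show ?thesis
    proof (cases "y = 0")
      case True
      with e have "a - of_real x = 0" by simp
      thus ?thesis by (intro exI[of _ x]) simp
    next
      case False
      define j where "j = (a - of_real x) / of_real y"
      have "j * j = -1" unfolding j_def using e False
        by (simp add: field_simps)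
      thus ?thesis using \<open>\<not> (\<exists>j::'a. j * j = -1)\<close> by blast
    qed
  qed
  thus ?thesis by blast
qed

lemma j_not_real:
  assumes j: "(j::'a::real_normed_field) * j = -1" shows "j \<noteq> of_real t"
proof
  assume "j = of_real t"
  with j have "of_real (t * t + 1) = (0::'a)" by (simp add: algebra_simps)
  hence "t * t + 1 = 0" by (simp only: of_real_eq_0_iff)
  moreover have "0 \<le> t * t" by simp
  ultimately show False by linarith
qed

lemma j_coords_unique:
  assumes j: "(j::'a::real_normed_field) * j = -1"
    and e: "of_real r + of_real s * j = of_real r' + of_real s' * j"
  shows "r = r' \<and> s = s'"
proof -
  have ss: "s = s'"
  proof (rule ccontr)
    assume "s \<noteq> s'"
    have "of_real (r' - r) = of_real (s - s') * j" using e by (simp add: algebra_simps)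
    hence "j = of_real (r' - r) / of_real (s - s')" using \<open>s \<noteq> s'\<close> by (simp add: field_simps)
    hence "j = of_real ((r' - r) / (s - s'))" by simp
    thus False using j_not_real[OF j] by blast
  qed
  with e have "r = r'" by simp
  with ss show ?thesis by simp
qed

lemma j_mult:
  "(of_real r + of_real s * j) * (of_real a + of_real b * j) =
   of_real (r * a - s * b) + of_real (r * b + s * a) * (j::'a::real_normed_field)" if "j * j = -1"
proof -
  have "(of_real r + of_real s * j) * (of_real a + of_real b * j) =
    of_real (r * a) + of_real (r * b + s * a) * j + of_real (s * b) * (j * j)"
    by (simp add: algebra_simps)
  thus ?thesis using that by (simp add: algebra_simps)
qed

lemma j_norm:
  assumes j: "(j::'a::real_normed_field) * j = -1"
  shows "norm (of_real r + of_real s * j) = sqrt (r^2 + s^2)"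
proof -
  have nj: "norm j = 1"
  proof -
    have "norm j * norm j = 1" using j by (metis norm_minus_cancel norm_mult norm_one)
    hence "(norm j - 1) * (norm j + 1) = 0" by (simp add: algebra_simps)
    moreover have "norm j + 1 \<noteq> 0" using norm_ge_zero[of j] by linarith
    ultimately show ?thesis by simp
  qed
  have le2: "norm (of_real a + of_real b * j) \<le> 2" if "a^2 + b^2 = 1" for a b
  proof -
    have "a^2 \<le> 1" "b^2 \<le> 1" using that zero_le_power2[of a] zero_le_power2[of b] by linarith+
    hence "\<bar>a\<bar> \<le> 1" "\<bar>b\<bar> \<le> 1" by (simp_all add: abs_square_le_1)
    moreover have "norm (of_real a + of_real b * j) \<le> \<bar>a\<bar> + \<bar>b\<bar>"
      using norm_triangle_ineq[of "of_real a" "of_real b * j"] by (simp add: norm_mult nj)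
    ultimately show ?thesis by linarith
  qed
  have pw: "\<exists>c d. c^2 + d^2 = 1 \<and> (of_real a + of_real b * j)^n = of_real c + of_real d * j"
    if ab: "a^2 + b^2 = 1" for a b n
  proof (induction n)
    case 0 show ?case by (intro exI[of _ 1] exI[of _ 0]) simp
  next
    case (Suc n)
    then obtain c d where cd: "c^2 + d^2 = 1" "(of_real a + of_real b * j)^n = of_real c + of_real d * j" by blast
    have "(of_real a + of_real b * j)^Suc n = of_real (a * c - b * d) + of_real (a * d + b * c) * j"
      using cd(2) j_mult[OF j] by simp
    moreover have "(a * c - b * d)^2 + (a * d + b * c)^2 = (a^2 + b^2) * (c^2 + d^2)"
      by (simp add: power2_eq_square algebra_simps)
    ultimately show ?case using ab cd(1) by (intro exI) auto
  qed
  have le1: "norm (of_real a + of_real b * j) \<le> 1" if ab: "a^2 + b^2 = 1" for a b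
  proof (rule ccontr)
    assume "\<not> ?thesis"
    then obtain n where "2 < norm (of_real a + of_real b * j) ^ n" using real_arch_pow by fastforce
    moreover obtain c d where "c^2 + d^2 = 1" "(of_real a + of_real b * j)^n = of_real c + of_real d * j"
      using pw[OF ab] by blast
    ultimately show False using le2 by (metis norm_power not_le)
  qed
  have eq1: "norm (of_real a + of_real b * j) = 1" if ab: "a^2 + b^2 = 1" for a b
  proof -
    have "(of_real a + of_real b * j) * (of_real a + of_real (-b) * j) = of_real (a^2 + b^2)"
      using j_mult[OF j, of a b a "-b"] by (simp add: power2_eq_square)
    hence "norm (of_real a + of_real b * j) * norm (of_real a + of_real (-b) * j) = 1"
      using ab by (metis norm_mult norm_one of_real_1)
    moreover have "norm (of_real a + of_real (-b) * j) \<le> 1" using le1[of a "-b"] ab by simp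
    moreover have "norm (of_real a + of_real b * j) \<le> 1" using le1 ab by simp
    moreover have "norm (of_real a + of_real b * j) * norm (of_real a + of_real (-b) * j) \<le> norm (of_real a + of_real b * j)"
      using calculation(2) by (intro mult_left_le) auto
    ultimately show ?thesis by linarith
  qed
  show ?thesis
  proof (cases "r^2 + s^2 = 0")
    case True
    hence "r = 0" "s = 0" using zero_le_power2[of r] zero_le_power2[of s] by simp_all
    thus ?thesis by simp
  next
    case False
    define \<rho> where "\<rho> = sqrt (r^2 + s^2)"
    have "0 < r^2 + s^2" using False zero_le_power2[of r] zero_le_power2[of s] by linarith
    hence rpos: "0 < \<rho>" unfolding \<rho>_def by simp
    have "(r/\<rho>)^2 + (s/\<rho>)^2 = 1" using rpos False unfolding \<rho>_def
      by (simp add: power_divide add_divide_distrib[symmetric])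
    hence "norm (of_real (r/\<rho>) + of_real (s/\<rho>) * j) = 1" by (rule eq1)
    moreover have "of_real r + of_real s * j = of_real \<rho> * (of_real (r/\<rho>) + of_real (s/\<rho>) * j)"
    proof -
      have "\<rho>*(r/\<rho>) = r" "\<rho>*(s/\<rho>) = s" using rpos by simp_all
      moreover have "of_real \<rho> * (of_real (r/\<rho>) + of_real (s/\<rho>) * j) = of_real (\<rho>*(r/\<rho>)) + of_real (\<rho>*(s/\<rho>)) * (j::'a)"
        by (simp only: of_real_mult distrib_left mult.assoc)
      ultimately show ?thesis by simp
    qed
    ultimately show ?thesis using rpos unfolding \<rho>_def by (simp add: norm_mult)
  qed
qed


lemma j_rep:
  assumes j: "(j::'a::real_normed_field) * j = -1"
  shows "\<exists>r s. a = of_real r + of_real s * j"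
proof -
  from k_cases[where 'a='a] show ?thesis
  proof
    assume "\<forall>a::'a. \<exists>r. a = of_real r"
    then obtain t where "j = of_real t" by blast
    with j_not_real[OF j] show ?thesis by blast
  next
    assume "\<exists>j0::'a. j0 * j0 = -1 \<and> (\<forall>a. \<exists>r s. a = of_real r + of_real s * j0)"
    then obtain j0 :: 'a where j0: "j0 * j0 = -1" "\<forall>a. \<exists>r s. a = of_real r + of_real s * j0" by blast
    obtain r s where rs: "a = of_real r + of_real s * j0" using j0 by blast
    have "(j - j0) * (j + j0) = 0" using j j0(1) by (simp add: algebra_simps)
    hence "j = j0 \<or> j = - j0" by (simp add: eq_neg_iff_add_eq_0)
    thus ?thesis
    proof
      assume "j = j0" thus ?thesis using rs by blast
    next
      assume "j = - j0"
      hence "a = of_real r + of_real (-s) * j" using rs by simp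
      thus ?thesis by blast
    qed
  qed
qed

lemma real_rep:
  assumes "\<not> (\<exists>j::'a::real_normed_field. j * j = -1)"
  shows "\<exists>r. (a::'a) = of_real r"
  using k_cases[where 'a='a] assms by blast

definition kj :: "'a::real_normed_field" where "kj = (SOME j. j * j = -1)"

definition kre :: "'a::real_normed_field \<Rightarrow> real" where
  "kre w = (if (\<exists>j::'a. j * j = -1) then (THE r. \<exists>s. w = of_real r + of_real s * kj) else (THE r. w = of_real r))"

lemma kj: "\<exists>j::'a::real_normed_field. j * j = -1 \<Longrightarrow> (kj::'a) * kj = -1"
  unfolding kj_def by (rule someI_ex)

lemma kre_rep:
  assumes "\<exists>j::'a::real_normed_field. j * j = -1"
  shows "kre (of_real r + of_real s * (kj::'a)) = r"
proof -
  have "(THE r'. \<exists>s'. of_real r + of_real s * (kj::'a) = of_real r' + of_real s' * kj) = r"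
    by (rule the_equality) (use j_coords_unique[OF kj[OF assms]] in blast)+
  thus ?thesis using assms by (simp add: kre_def)
qed

lemma kre_real_case:
  assumes "\<not> (\<exists>j::'a::real_normed_field. j * j = -1)"
  shows "kre (of_real r :: 'a) = r"
  using assms by (simp add: kre_def)

lemma kre_of_real: "kre (of_real r :: 'a::real_normed_field) = r"
proof (cases "\<exists>j::'a. j * j = -1")
  case True
  thus ?thesis using kre_rep[OF True, of r 0] by simp
qed (rule kre_real_case)

lemma kre_add: "kre (v + w) = kre v + kre (w::'a::real_normed_field)"
proof (cases "\<exists>j::'a. j * j = -1")
  case True
  obtain r s r' s' where "v = of_real r + of_real s * kj" "w = of_real r' + of_real s' * kj"
    using j_rep[OF kj[OF True]] by metis
  moreover have "of_real r + of_real s * kj + (of_real r' + of_real s' * kj) = of_real (r + r') + of_real (s + s') * (kj::'a)"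
    by (simp add: algebra_simps)
  ultimately show ?thesis by (simp only: kre_rep[OF True])
next
  case False
  obtain r r' where "v = of_real r" "w = of_real r'" using real_rep[OF False] by metis
  thus ?thesis using kre_real_case[OF False] by (simp flip: of_real_add)
qed

lemma kre_scale: "kre (of_real t * w) = t * kre (w::'a::real_normed_field)"
proof (cases "\<exists>j::'a. j * j = -1")
  case True
  obtain r s where "w = of_real r + of_real s * kj"
    using j_rep[OF kj[OF True]] by metis
  moreover have "of_real t * (of_real r + of_real s * kj) = of_real (t * r) + of_real (t * s) * (kj::'a)"
    by (simp add: algebra_simps)
  ultimately show ?thesis by (simp only: kre_rep[OF True])
next
  case False
  obtain r where "w = of_real r" using real_rep[OF False] by metis
  thus ?thesis using kre_real_case[OF False] by (simp flip: of_real_mult)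
qed

lemma kre_abs: "\<bar>kre w\<bar> \<le> norm (w::'a::real_normed_field)"
proof (cases "\<exists>j::'a. j * j = -1")
  case True
  obtain r s where w: "w = of_real r + of_real s * kj"
    using j_rep[OF kj[OF True]] by metis
  have "\<bar>r\<bar> = sqrt (r^2)" by simp
  also have "\<dots> \<le> sqrt (r^2 + s^2)" by simp
  also have "\<dots> = norm w" using w j_norm[OF kj[OF True]] by simp
  finally show ?thesis using w kre_rep[OF True] by simp
next
  case False
  obtain r where "w = of_real r" using real_rep[OF False] by metis
  thus ?thesis using kre_real_case[OF False] by simp
qed

definition cx :: "('a::real_normed_field \<Rightarrow> 'v \<Rightarrow> 'v) \<Rightarrow> ('v \<Rightarrow> real) \<Rightarrow> 'v \<Rightarrow> 'a" where
  "cx sc u z = (if (\<exists>j::'a. j * j = -1) then of_real (u z) + of_real (- u (sc kj z)) * kj else of_real (u z))"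

lemma vs_self: "vector_space ((*) :: 'a::field \<Rightarrow> 'a \<Rightarrow> 'a)"
  by unfold_locales (simp_all add: algebra_simps)

lemma cx_re: "kre (cx sc u z) = u z"
proof (cases "\<exists>j::'a::real_normed_field. j * j = -1")
  case True
  hence "cx sc u z = of_real (u z) + of_real (- u (sc kj z)) * (kj::'a)" by (simp only: cx_def if_P)
  thus ?thesis by (simp only: kre_rep[OF True])
qed (simp add: cx_def kre_of_real)

lemma cx_linear:
  fixes sc :: "'a::real_normed_field \<Rightarrow> 'v::ab_group_add \<Rightarrow> 'v"
  assumes vs: "vector_space sc"
    and ua: "\<And>x y. u (x + y) = u x + u y"
    and us: "\<And>t x. u (sc (of_real t) x) = t * u x"
  shows "Vector_Spaces.linear sc (*) (cx sc u)"
proof -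
  interpret vector_space sc by (rule vs)
  have add: "cx sc u (x + y) = cx sc u x + cx sc u y" for x y
    by (simp add: cx_def ua algebra_simps)
  have hom: "cx sc u (sc c x) = c * cx sc u x" for c x
  proof (cases "\<exists>j::'a. j * j = -1")
    case True
    have jj: "(kj::'a) * kj = -1" by (rule kj[OF True])
    obtain a b where c: "c = of_real a + of_real b * kj" using j_rep[OF jj] by metis
    define p where "p = u x"
    define q where "q = u (sc kj x)"
    have "sc c x = sc (of_real a) x + sc (of_real b) (sc kj x)"
      by (simp only: c scale_left_distrib scale_scale)
    hence e1: "u (sc c x) = a * p + b * q" by (simp only: p_def q_def ua us)
    have "kj * c = of_real a * kj + of_real b * (kj * kj)" by (simp add: c algebra_simps)
    hence kjc: "kj * c = of_real (- b) + of_real a * kj" unfolding jj by simp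
    have "sc kj (sc c x) = sc (of_real (- b)) x + sc (of_real a) (sc kj x)"
      by (simp only: kjc scale_scale scale_left_distrib)
    hence e2: "u (sc kj (sc c x)) = - b * p + a * q" by (simp only: p_def q_def ua us)
    have "c * cx sc u x = (of_real a + of_real b * kj) * (of_real p + of_real (- q) * kj)"
      using True by (simp add: cx_def c p_def q_def)
    also have "\<dots> = of_real (a * p) + of_real (b * p - a * q) * kj + of_real (- b * q) * (kj * kj)"
      by (simp add: algebra_simps)
    also have "\<dots> = of_real (a * p + b * q) + of_real (- (- b * p + a * q)) * kj"
      unfolding jj by (simp add: algebra_simps)
    also have "\<dots> = cx sc u (sc c x)" using True by (simp only: cx_def e1 e2 if_P)
    finally show ?thesis by simp
  next
    case False
    obtain a where c: "c = of_real a" using real_rep[OF False] by metis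
    show ?thesis using False by (simp add: cx_def c us)
  qed
  show ?thesis unfolding Vector_Spaces.linear_iff using vs vs_self add hom by blast
qed

lemma cx_norm:
  fixes sc :: "'a::real_normed_field \<Rightarrow> 'v::ab_group_add \<Rightarrow> 'v"
  assumes vs: "vector_space sc"
    and ua: "\<And>x y. u (x + y) = u x + u y"
    and us: "\<And>t x. u (sc (of_real t) x) = t * u x"
  shows "\<exists>c. norm c = 1 \<and> norm (cx sc u z) = u (sc c z)"
proof -
  have lin: "Vector_Spaces.linear sc (*) (cx sc u)" by (rule cx_linear[OF vs ua us])
  have hom: "cx sc u (sc c x) = c * cx sc u x" for c x
    using lin unfolding Vector_Spaces.linear_iff by blast
  show ?thesis
  proof (cases "cx sc u z = 0")
    case True
    moreover have "sc 1 z = z" using vs by (simp add: vector_space.vector_space_assms(4))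
    ultimately show ?thesis using cx_re[of sc u z] by (intro exI[of _ 1]) (simp add: kre_of_real[of 0, simplified])
  next
    case False
    define c where "c = of_real (norm (cx sc u z)) / cx sc u z"
    have "norm c = 1" using False by (simp add: c_def norm_divide)
    moreover have "cx sc u (sc c z) = of_real (norm (cx sc u z))" using False by (simp add: hom c_def)
    hence "u (sc c z) = norm (cx sc u z)" using cx_re[of sc u "sc c z"] by (simp add: kre_of_real)
    ultimately show ?thesis by auto
  qed
qed


locale hb_setup =
  fixes sc :: "'a::real_normed_field \<Rightarrow> 'v::ab_group_add \<Rightarrow> 'v" and p :: "'v \<Rightarrow> real"
  assumes vs: "vector_space sc"
    and padd: "\<And>x y. p (x + y) \<le> p x + p y"
    and phom: "\<And>t x. 0 \<le> t \<Longrightarrow> p (sc (of_real t) x) = t * p x"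
begin

interpretation V: vector_space sc by (rule vs)

definition rs :: "real \<Rightarrow> 'v \<Rightarrow> 'v" where "rs t x = sc (of_real t) x"

lemma rs_add_left: "rs (a + b) x = rs a x + rs b x"
  by (simp add: rs_def V.scale_left_distrib)
lemma rs_add_right: "rs a (x + y) = rs a x + rs a y"
  by (simp add: rs_def V.scale_right_distrib)
lemma rs_rs: "rs a (rs b x) = rs (a * b) x"
  by (simp add: rs_def)
lemma rs_one: "rs 1 x = x" by (simp add: rs_def)
lemma rs_zero: "rs 0 x = 0" by (simp add: rs_def)
lemma rs_minus1: "rs (-1) x = - x" by (simp add: rs_def)
lemma rs_diff_right: "rs a (x - y) = rs a x - rs a y"
  by (simp add: rs_def V.scale_right_diff_distrib)
lemma rs_cancel: "rs a x = rs b x \<Longrightarrow> x \<noteq> 0 \<Longrightarrow> a = b"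
  by (simp add: rs_def)

lemma p0: "p 0 = 0" using phom[of 0 0] by (simp add: rs_def[symmetric] rs_zero)

lemma p_rs: "0 \<le> t \<Longrightarrow> p (rs t x) = t * p x" by (simp add: rs_def phom)

lemma p_lower: "t * p x \<le> p (rs t x)"
proof (cases "0 \<le> t")
  case True thus ?thesis by (simp add: p_rs)
next
  case False
  have "0 = p (rs t x + rs (-t) x)" by (simp add: rs_add_left[symmetric] rs_zero p0)
  also have "\<dots> \<le> p (rs t x) + p (rs (-t) x)" by (rule padd)
  also have "p (rs (-t) x) = - t * p x" using False by (simp add: p_rs)
  finally show ?thesis by simp
qed

definition good :: "('v \<times> real) set \<Rightarrow> 'v \<Rightarrow> bool" where
  "good Gr y0 \<longleftrightarrow>
    (\<forall>x a y b. (x,a) \<in> Gr \<longrightarrow> (y,b) \<in> Gr \<longrightarrow> (x + y, a + b) \<in> Gr) \<and>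
    (\<forall>x a t. (x,a) \<in> Gr \<longrightarrow> (rs t x, t * a) \<in> Gr) \<and>
    (\<forall>x a b. (x,a) \<in> Gr \<longrightarrow> (x,b) \<in> Gr \<longrightarrow> a = b) \<and>
    (\<forall>x a. (x,a) \<in> Gr \<longrightarrow> a \<le> p x) \<and> (y0, p y0) \<in> Gr"

lemma goodD:
  assumes "good Gr y0"
  shows good_addD: "(x,a) \<in> Gr \<Longrightarrow> (y,b) \<in> Gr \<Longrightarrow> (x + y, a + b) \<in> Gr"
    and good_scaleD: "(x,a) \<in> Gr \<Longrightarrow> (rs t x, t * a) \<in> Gr"
    and good_funD: "(x,a) \<in> Gr \<Longrightarrow> (x,b) \<in> Gr \<Longrightarrow> a = b"
    and good_domD: "(x,a) \<in> Gr \<Longrightarrow> a \<le> p x"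
    and good_y0D: "(y0, p y0) \<in> Gr"
  using assms unfolding good_def by blast+

lemma good_init: "good (range (\<lambda>t. (rs t y0, t * p y0))) y0"
proof -
  have f: "t * p y0 = t' * p y0" if "rs t y0 = rs t' y0" for t t'
  proof (cases "y0 = 0")
    case True thus ?thesis by (simp add: p0)
  next
    case False thus ?thesis using rs_cancel[OF that] by simp
  qed
  show ?thesis unfolding good_def
  proof (intro conjI allI impI)
    fix x a y b assume "(x, a) \<in> range (\<lambda>t. (rs t y0, t * p y0))" "(y, b) \<in> range (\<lambda>t. (rs t y0, t * p y0))"
    then obtain t t' where "x = rs t y0" "a = t * p y0" "y = rs t' y0" "b = t' * p y0" by auto
    hence "(x + y, a + b) = (rs (t + t') y0, (t + t') * p y0)" by (simp add: rs_add_left distrib_right)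
    thus "(x + y, a + b) \<in> range (\<lambda>t. (rs t y0, t * p y0))" by blast
  next
    fix x a t assume "(x, a) \<in> range (\<lambda>t. (rs t y0, t * p y0))"
    then obtain s where "x = rs s y0" "a = s * p y0" by auto
    hence "(rs t x, t * a) = (rs (t * s) y0, (t * s) * p y0)" by (simp add: rs_rs)
    thus "(rs t x, t * a) \<in> range (\<lambda>t. (rs t y0, t * p y0))" by blast
  next
    fix x a b assume "(x, a) \<in> range (\<lambda>t. (rs t y0, t * p y0))" "(x, b) \<in> range (\<lambda>t. (rs t y0, t * p y0))"
    then obtain t t' where "(x, a) = (rs t y0, t * p y0)" "(x, b) = (rs t' y0, t' * p y0)" by blast
    hence "rs t y0 = rs t' y0" "a = t * p y0" "b = t' * p y0" by simp_all
    thus "a = b" using f[of t t'] by simp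
  next
    fix x a assume "(x, a) \<in> range (\<lambda>t. (rs t y0, t * p y0))"
    then obtain t where "x = rs t y0" "a = t * p y0" by auto
    thus "a \<le> p x" using p_lower by simp
  next
    have "(y0, p y0) = (rs 1 y0, 1 * p y0)" by (simp add: rs_one)
    thus "(y0, p y0) \<in> range (\<lambda>t. (rs t y0, t * p y0))" by blast
  qed
qed

lemma good_union:
  assumes C: "C \<in> chains {Gr. good Gr y0}" and ne: "C \<noteq> {}"
  shows "good (\<Union>C) y0"
proof -
  have sub: "\<And>X. X \<in> C \<Longrightarrow> good X y0" using C by (auto simp: chains_def)
  have ch: "\<And>X Y. X \<in> C \<Longrightarrow> Y \<in> C \<Longrightarrow> X \<subseteq> Y \<or> Y \<subseteq> X"
    using C by (auto simp: chains_def chain_subset_def)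
  have two: "\<exists>Z\<in>C. (x,a) \<in> Z \<and> (y,b) \<in> Z" if xa: "(x,a) \<in> \<Union>C" and yb: "(y,b) \<in> \<Union>C" for x a y b
  proof -
    obtain X where X: "X \<in> C" "(x,a) \<in> X" using xa by blast
    obtain Y where Y: "Y \<in> C" "(y,b) \<in> Y" using yb by blast
    show ?thesis using ch[OF X(1) Y(1)] X Y by blast
  qed
  show ?thesis unfolding good_def
  proof (intro conjI allI impI)
    fix x a y b assume "(x, a) \<in> \<Union>C" "(y, b) \<in> \<Union>C"
    then obtain Z where "Z \<in> C" "(x,a) \<in> Z" "(y,b) \<in> Z" using two by blast
    thus "(x + y, a + b) \<in> \<Union>C" using good_addD[OF sub[of Z]] by blast
  next
    fix x a t assume "(x, a) \<in> \<Union>C"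
    then obtain Z where "Z \<in> C" "(x,a) \<in> Z" by blast
    thus "(rs t x, t * a) \<in> \<Union>C" using good_scaleD[OF sub[of Z]] by blast
  next
    fix x a b assume "(x, a) \<in> \<Union>C" "(x, b) \<in> \<Union>C"
    then obtain Z where "Z \<in> C" "(x,a) \<in> Z" "(x,b) \<in> Z" using two by blast
    thus "a = b" using good_funD[OF sub[of Z]] by blast
  next
    fix x a assume "(x, a) \<in> \<Union>C"
    then obtain Z where "Z \<in> C" "(x,a) \<in> Z" by blast
    thus "a \<le> p x" using good_domD[OF sub[of Z]] by blast
  next
    obtain Z where "Z \<in> C" using ne by blast
    thus "(y0, p y0) \<in> \<Union>C" using good_y0D[OF sub[of Z]] by blast
  qed
qed


lemma good_neg: "good M y0 \<Longrightarrow> (x,a) \<in> M \<Longrightarrow> (- x, - a) \<in> M"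
  using good_scaleD[of M y0 x a "-1"] by (simp add: rs_minus1)

lemma good_zero: assumes "good M y0" shows "(0, 0) \<in> M"
proof -
  have "(rs 0 y0, 0 * p y0) \<in> M" by (rule good_scaleD[OF assms good_y0D[OF assms]])
  thus ?thesis by (simp add: rs_zero)
qed

lemma good_extend:
  assumes M: "good M y0" and z: "\<forall>a. (z,a) \<notin> M"
  shows "\<exists>G'. good G' y0 \<and> M \<subseteq> G' \<and> G' \<noteq> M"
proof -
  define S where "S = {a - p (x - z) | x a. (x,a) \<in> M}"
  define c where "c = Sup S"
  have Sne: "S \<noteq> {}" using good_y0D[OF M] by (auto simp: S_def)
  have Sbd: "s \<le> p (y + z) - b" if s: "s \<in> S" and yb: "(y,b) \<in> M" for s y b
  proof -
    obtain x a where xa: "s = a - p (x - z)" "(x,a) \<in> M" using s by (auto simp: S_def)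
    have "a + b \<le> p (x + y)" using good_domD[OF M good_addD[OF M xa(2) yb]] .
    moreover have "x + y = (x - z) + (y + z)" by (simp add: algebra_simps)
    hence "p (x + y) \<le> p (x - z) + p (y + z)" using padd[of "x - z" "y + z"] by simp
    ultimately show ?thesis using xa(1) by simp
  qed
  have bdd: "bdd_above S"
    unfolding bdd_above_def using Sbd good_y0D[OF M] by blast
  have B1: "a - p (x - z) \<le> c" if "(x,a) \<in> M" for x a
    unfolding c_def by (rule cSup_upper[OF _ bdd]) (use that in \<open>auto simp: S_def\<close>)
  have B2: "c \<le> p (y + z) - b" if "(y,b) \<in> M" for y b
    unfolding c_def by (rule cSup_least[OF Sne]) (use Sbd that in blast)
  define G' where "G' = {(x + rs t z, a + t * c) | x a t. (x,a) \<in> M}"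
  have fun': "a + t * c = a' + t' * c"
    if xa: "(x,a) \<in> M" and xa': "(x',a') \<in> M" and e: "x + rs t z = x' + rs t' z" for x a x' a' t t'
  proof (cases "t = t'")
    case True
    with e have "x = x'" by simp
    with True good_funD[OF M xa] xa' show ?thesis by simp
  next
    case False
    have d: "(x' - x, a' - a) \<in> M" using good_addD[OF M xa' good_neg[OF M xa]] by simp
    have "rs t z = rs (t - t') z + rs t' z" by (simp add: rs_add_left[symmetric])
    hence "rs (t - t') z = x' - x" using e by (simp add: algebra_simps)
    hence "rs (1 / (t - t')) (x' - x) = rs (1 / (t - t')) (rs (t - t') z)" by simp
    also have "\<dots> = rs ((1 / (t - t')) * (t - t')) z" by (simp only: rs_rs)
    also have "(1 / (t - t')) * (t - t') = 1" using False by simp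
    finally have "rs (1 / (t - t')) (x' - x) = z" by (simp add: rs_one)
    hence "(z, (1 / (t - t')) * (a' - a)) \<in> M" using good_scaleD[OF M d, of "1 / (t - t')"] by simp
    with z show ?thesis by blast
  qed
  have dom': "a + t * c \<le> p (x + rs t z)" if xa: "(x,a) \<in> M" for x a t
  proof -
    consider "t = 0" | "0 < t" | "t < 0" by linarith
    thus ?thesis
    proof cases
      case 1 thus ?thesis using good_domD[OF M xa] by (simp add: rs_zero)
    next
      case 2
      have m: "(rs (1/t) x, (1/t) * a) \<in> M" by (rule good_scaleD[OF M xa])
      have "c \<le> p (rs (1/t) x + z) - (1/t) * a" by (rule B2[OF m])
      hence "t * c \<le> t * (p (rs (1/t) x + z) - (1/t) * a)" using 2 by (intro mult_left_mono) auto
      also have "t * (p (rs (1/t) x + z) - (1/t) * a) = t * p (rs (1/t) x + z) - a" using 2 by (simp add: field_simps)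
      finally have "t * c \<le> t * p (rs (1/t) x + z) - a" .
      moreover have "t * p (rs (1/t) x + z) = p (x + rs t z)"
      proof -
        have "rs t (rs (1/t) x + z) = x + rs t z" using 2 by (simp add: rs_add_right rs_rs rs_one)
        thus ?thesis using p_rs[of t "rs (1/t) x + z"] 2 by simp
      qed
      ultimately show ?thesis by simp
    next
      case 3
      define s where "s = - t"
      have s: "0 < s" using 3 by (simp add: s_def)
      have m: "(rs (1/s) x, (1/s) * a) \<in> M" by (rule good_scaleD[OF M xa])
      have "(1/s) * a - p (rs (1/s) x - z) \<le> c" by (rule B1[OF m])
      hence "s * ((1/s) * a - p (rs (1/s) x - z)) \<le> s * c" using s by (intro mult_left_mono) auto
      moreover have "s * ((1/s) * a - p (rs (1/s) x - z)) = a - s * p (rs (1/s) x - z)" using s by (simp add: field_simps)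
      ultimately have "a - s * p (rs (1/s) x - z) \<le> s * c" by simp
      moreover have "s * p (rs (1/s) x - z) = p (x + rs t z)"
      proof -
        have "rs t z = - rs s z" unfolding s_def by (simp add: rs_minus1[symmetric] rs_rs)
        hence "rs s (rs (1/s) x - z) = x + rs t z" using s by (simp add: rs_diff_right rs_rs rs_one)
        thus ?thesis using p_rs[of s "rs (1/s) x - z"] s by simp
      qed
      ultimately show ?thesis unfolding s_def by simp
    qed
  qed
  have good': "good G' y0" unfolding good_def
  proof (intro conjI allI impI)
    fix x a y b assume "(x, a) \<in> G'" "(y, b) \<in> G'"
    then obtain x1 a1 t1 x2 a2 t2 where h: "(x, a) = (x1 + rs t1 z, a1 + t1 * c)" "(x1,a1) \<in> M"
      "(y, b) = (x2 + rs t2 z, a2 + t2 * c)" "(x2,a2) \<in> M" unfolding G'_def by blast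
    have "(x + y, a + b) = ((x1 + x2) + rs (t1 + t2) z, (a1 + a2) + (t1 + t2) * c)"
      using h by (simp add: rs_add_left algebra_simps)
    moreover have "(x1 + x2, a1 + a2) \<in> M" using good_addD[OF M h(2) h(4)] .
    ultimately show "(x + y, a + b) \<in> G'" unfolding G'_def by blast
  next
    fix x a t assume "(x, a) \<in> G'"
    then obtain x1 a1 t1 where h: "(x, a) = (x1 + rs t1 z, a1 + t1 * c)" "(x1,a1) \<in> M"
      unfolding G'_def by blast
    have "(rs t x, t * a) = (rs t x1 + rs (t * t1) z, t * a1 + (t * t1) * c)"
      using h by (simp add: rs_add_right rs_rs algebra_simps)
    moreover have "(rs t x1, t * a1) \<in> M" using good_scaleD[OF M h(2)] .
    ultimately show "(rs t x, t * a) \<in> G'" unfolding G'_def by blast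
  next
    fix x a b assume "(x, a) \<in> G'" "(x, b) \<in> G'"
    then obtain x1 a1 t1 x2 a2 t2 where h: "(x, a) = (x1 + rs t1 z, a1 + t1 * c)" "(x1,a1) \<in> M"
      "(x, b) = (x2 + rs t2 z, a2 + t2 * c)" "(x2,a2) \<in> M" unfolding G'_def by blast
    hence "x1 + rs t1 z = x2 + rs t2 z" by simp
    from fun'[OF h(2) h(4) this] h show "a = b" by simp
  next
    fix x a assume "(x, a) \<in> G'"
    then obtain x1 a1 t1 where h: "(x, a) = (x1 + rs t1 z, a1 + t1 * c)" "(x1,a1) \<in> M"
      unfolding G'_def by blast
    thus "a \<le> p x" using dom'[OF h(2), of t1] by simp
  next
    have "(y0, p y0) = (y0 + rs 0 z, p y0 + 0 * c)" by (simp add: rs_zero)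
    thus "(y0, p y0) \<in> G'" unfolding G'_def using good_y0D[OF M] by blast
  qed
  have sub: "M \<subseteq> G'"
  proof
    fix w assume w: "w \<in> M"
    obtain x a where "w = (x, a)" by fastforce
    moreover have "(x, a) = (x + rs 0 z, a + 0 * c)" by (simp add: rs_zero)
    ultimately show "w \<in> G'" unfolding G'_def using w by blast
  qed
  have "(z, c) = (0 + rs 1 z, 0 + 1 * c)" by (simp add: rs_one)
  hence "(z, c) \<in> G'" unfolding G'_def using good_zero[OF M] by blast
  with z have "G' \<noteq> M" by blast
  with good' sub show ?thesis by blast
qed

lemma HB_exists:
  "\<exists>u. (\<forall>x y. u (x + y) = u x + u y) \<and> (\<forall>t x. u (sc (of_real t) x) = t * u x) \<and> (\<forall>x. u x \<le> p x) \<and> u y0 = p y0"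
proof -
  have "\<forall>C\<in>chains {Gr. good Gr y0}. \<exists>U\<in>{Gr. good Gr y0}. \<forall>X\<in>C. X \<subseteq> U"
  proof
    fix C assume C: "C \<in> chains {Gr. good Gr y0}"
    show "\<exists>U\<in>{Gr. good Gr y0}. \<forall>X\<in>C. X \<subseteq> U"
    proof (cases "C = {}")
      case True thus ?thesis using good_init[of y0] by blast
    next
      case False thus ?thesis using good_union[OF C False] by blast
    qed
  qed
  from Zorn_Lemma2[OF this] obtain M where M: "good M y0" and mx: "\<forall>X. good X y0 \<longrightarrow> M \<subseteq> X \<longrightarrow> X = M"
    by blast
  have tot: "\<exists>a. (x,a) \<in> M" for x
  proof (rule ccontr)
    assume "\<nexists>a. (x, a) \<in> M"
    then obtain G' where "good G' y0" "M \<subseteq> G'" "G' \<noteq> M" using good_extend[OF M] by blast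
    with mx show False by blast
  qed
  define u where "u x = (THE a. (x,a) \<in> M)" for x
  have uM: "(x, u x) \<in> M" for x
  proof -
    have "\<exists>!a. (x,a) \<in> M" using tot[of x] good_funD[OF M] by blast
    thus ?thesis unfolding u_def by (rule theI')
  qed
  have ueq: "u x = a" if "(x,a) \<in> M" for x a using good_funD[OF M uM that] .
  show ?thesis
  proof (intro exI[of _ u] conjI allI)
    fix x y show "u (x + y) = u x + u y" using good_addD[OF M uM uM] ueq by blast
  next
    fix t x
    have "(rs t x, t * u x) \<in> M" by (rule good_scaleD[OF M uM])
    thus "u (sc (of_real t) x) = t * u x" using ueq unfolding rs_def by blast
  next
    fix x show "u x \<le> p x" using good_domD[OF M uM] .
  next
    show "u y0 = p y0" using ueq[OF good_y0D[OF M]] .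
  qed
qed

end


locale lcs_loc =
  fixes sc :: "'k::real_normed_field \<Rightarrow> 'v::ab_group_add \<Rightarrow> 'v" and T :: "'v topology"
  assumes lcs: "lcs sc T"
begin

lemma vs: "vector_space sc" using lcs by (simp add: lcs_def)

interpretation V: vector_space sc by (rule vs)

lemma topT: "topspace T = UNIV" using lcs by (simp add: lcs_def lc_vector_topology_def)
lemma add_cont: "continuous_map (prod_topology T T) T (\<lambda>(x, y). x + y)"
  using lcs by (simp add: lcs_def lc_vector_topology_def)
lemma sc_cont: "continuous_map (prod_topology (euclidean::'k topology) T) T (\<lambda>(c, x). sc c x)"
  using lcs by (simp add: lcs_def lc_vector_topology_def)
lemma loc_convex: "openin T U \<Longrightarrow> x \<in> U \<Longrightarrow> \<exists>V. openin T V \<and> convex_in (+) sc V \<and> x \<in> V \<and> V \<subseteq> U"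
  using lcs by (simp add: lcs_def lc_vector_topology_def)
lemma haus: "Hausdorff_space T" using lcs by (simp add: lcs_def)

lemma cont_transl: "continuous_map T T (\<lambda>z. z + w)"
proof -
  have "continuous_map T (prod_topology T T) (\<lambda>z. (z, w))"
    by (intro continuous_map_pairedI) (auto simp: topT)
  from continuous_map_compose[OF this add_cont] show ?thesis by (simp add: o_def)
qed

lemma cont_scale: "continuous_map T T (\<lambda>z. sc c z)"
proof -
  have "continuous_map T (prod_topology euclidean T) (\<lambda>z. (c, z))"
    by (intro continuous_map_pairedI) auto
  from continuous_map_compose[OF this sc_cont] show ?thesis by (simp add: o_def)
qed

lemma cont_affine: "continuous_map T T (\<lambda>z. sc c (z - z0))"
proof -
  have "continuous_map T T ((\<lambda>z. sc c z) \<circ> (\<lambda>z. z + (- z0)))"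
    by (rule continuous_map_compose[OF cont_transl cont_scale])
  thus ?thesis by (simp add: o_def)
qed

lemma open_pre: "openin T W \<Longrightarrow> openin T {z. sc c (z - z0) \<in> W}"
  using openin_continuous_map_preimage[OF cont_affine, of W c z0] by (simp add: topT)

lemma cont_scalar: "continuous_map euclidean T (\<lambda>c. sc c y)"
proof -
  have "continuous_map euclidean (prod_topology euclidean T) (\<lambda>c::'k. (c, y))"
    by (intro continuous_map_pairedI) (auto simp: topT)
  from continuous_map_compose[OF this sc_cont] show ?thesis by (simp add: o_def)
qed

lemma cont_rscalar: "continuous_map euclidean T (\<lambda>t::real. sc (of_real t) y)"
proof -
  have "continuous_map euclidean euclidean (of_real :: real \<Rightarrow> 'k)"
    by (simp add: continuous_on_of_real continuous_on_id)
  from continuous_map_compose[OF this cont_scalar] show ?thesis by (simp add: o_def)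
qed

lemma absorb: assumes "openin T B" "0 \<in> B" shows "\<exists>t>0. sc (of_real t) y \<in> B"
proof -
  have "openin euclidean {t::real \<in> topspace euclidean. sc (of_real t) y \<in> B}"
    by (rule openin_continuous_map_preimage[OF cont_rscalar assms(1)])
  hence "open {t::real. sc (of_real t) y \<in> B}" by simp
  moreover have "0 \<in> {t::real. sc (of_real t) y \<in> B}" using assms(2) by simp
  ultimately obtain e where e: "e > 0" "ball 0 e \<subseteq> {t::real. sc (of_real t) y \<in> B}"
    by (meson openE)
  have "e/2 \<in> ball 0 e" using e by simp
  hence "sc (of_real (e/2)) y \<in> B" using e(2) by blast
  moreover have "e/2 > 0" using e by simp
  ultimately show ?thesis by blast
qed

definition balanced :: "'v set \<Rightarrow> bool" where
  "balanced M \<longleftrightarrow> (\<forall>c y. norm c \<le> 1 \<longrightarrow> y \<in> M \<longrightarrow> sc c y \<in> M)"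

definition disk :: "'v set \<Rightarrow> bool" where
  "disk M \<longleftrightarrow> convex_in (+) sc M \<and> balanced M \<and> (\<exists>B. openin T B \<and> 0 \<in> B \<and> B \<subseteq> M)"


lemma bal_core:
  assumes W: "openin T W" "0 \<in> W" "convex_in (+) sc W"
  shows "\<exists>M. disk M \<and> M \<subseteq> W"
proof -
  define M where "M = {y. \<forall>c. norm c \<le> 1 \<longrightarrow> sc c y \<in> W}"
  have conv: "convex_in (+) sc M" unfolding convex_in_def M_def
  proof (intro ballI allI impI, clarify)
    fix x y and t :: real and c :: 'k assume x: "\<forall>c. norm c \<le> 1 \<longrightarrow> sc c x \<in> W" and y: "\<forall>c. norm c \<le> 1 \<longrightarrow> sc c y \<in> W"
      and t: "0 \<le> t" "t \<le> 1" and c: "norm (c::'k) \<le> 1"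
    have "sc (of_real t) (sc c x) + sc (of_real (1 - t)) (sc c y) \<in> W"
      using W(3) x y c t unfolding convex_in_def by blast
    thus "sc c (sc (of_real t) x + sc (of_real (1 - t)) y) \<in> W"
      by (simp add: V.scale_right_distrib mult.commute)
  qed
  have bal: "balanced M" unfolding balanced_def M_def
  proof (intro allI impI, clarify)
    fix c y c' assume "norm (c::'k) \<le> 1" "\<forall>c. norm c \<le> 1 \<longrightarrow> sc c y \<in> W" "norm (c'::'k) \<le> 1"
    moreover have "norm (c' * c) \<le> 1" using calculation by (simp add: norm_mult mult_le_one)
    ultimately show "sc c' (sc c y) \<in> W" by simp
  qed
  have sub: "M \<subseteq> W"
  proof
    fix y assume "y \<in> M"
    hence "\<forall>c. norm c \<le> 1 \<longrightarrow> sc c y \<in> W" unfolding M_def by simp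
    hence "sc 1 y \<in> W" by (metis norm_one order_refl)
    thus "y \<in> W" by simp
  qed
  define P where "P = {x \<in> topspace (prod_topology euclidean T). (\<lambda>(c, x). sc c x) x \<in> W}"
  have Po: "openin (prod_topology euclidean T) P"
    unfolding P_def by (rule openin_continuous_map_preimage[OF sc_cont W(1)])
  have P0: "((0::'k), 0) \<in> P"
    using W(2) by (simp add: topT P_def)
  obtain C V where CV: "openin euclidean C" "openin T V" "(0::'k) \<in> C" "0 \<in> V" "C \<times> V \<subseteq> P"
    using Po[unfolded openin_prod_topology_alt, rule_format, OF P0] by blast
  from CV(1,3) obtain \<delta> where \<delta>: "\<delta> > 0" "ball 0 \<delta> \<subseteq> C" by (auto simp: open_contains_ball)
  define B where "B = {y. sc (of_real (2/\<delta>)) (y - 0) \<in> V}"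
  have Bo: "openin T B" unfolding B_def by (rule open_pre[OF CV(2)])
  have B0: "0 \<in> B" using CV(4) by (simp add: B_def)
  have BM: "B \<subseteq> M"
  proof
    fix y assume "y \<in> B"
    hence yV: "sc (of_real (2/\<delta>)) y \<in> V" by (simp add: B_def)
    show "y \<in> M" unfolding M_def
    proof (intro CollectI allI impI)
      fix c :: 'k assume c: "norm c \<le> 1"
      have "norm (c * of_real (\<delta>/2)) \<le> \<delta>/2" using c \<delta> by (simp add: norm_mult mult_left_le_one_le)
      hence "c * of_real (\<delta>/2) \<in> C" using \<delta> by (intro subsetD[OF \<delta>(2)]) auto
      with yV have "(c * of_real (\<delta>/2), sc (of_real (2/\<delta>)) y) \<in> C \<times> V" by simp
      with CV(5) have "sc (c * of_real (\<delta>/2)) (sc (of_real (2/\<delta>)) y) \<in> W" unfolding P_def by auto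
      moreover have "c * of_real (\<delta>/2) * of_real (2/\<delta>) = c" using \<delta>
        by (simp add: mult.assoc flip: of_real_mult)
      ultimately show "sc c y \<in> W" by simp
    qed
  qed
  show ?thesis using conv bal sub Bo B0 BM unfolding disk_def by blast
qed


definition gauge :: "'v set \<Rightarrow> 'v \<Rightarrow> real" where
  "gauge M y = Inf {t. 0 < t \<and> sc (of_real (1/t)) y \<in> M}"

context
  fixes M assumes D: "disk M"
begin

lemma D_conv: "convex_in (+) sc M" using D by (simp add: disk_def)
lemma D_bal: "norm c \<le> 1 \<Longrightarrow> y \<in> M \<Longrightarrow> sc c y \<in> M" using D by (simp add: disk_def balanced_def)
lemma D_B: "\<exists>B. openin T B \<and> 0 \<in> B \<and> B \<subseteq> M" using D by (simp add: disk_def)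
lemma D_0: "0 \<in> M" using D_B by blast

lemma gS_ne: "\<exists>t. 0 < t \<and> sc (of_real (1/t)) y \<in> M"
proof -
  obtain B where B: "openin T B" "0 \<in> B" "B \<subseteq> M" using D_B by blast
  obtain t where t: "t > 0" "sc (of_real t) y \<in> B" using absorb[OF B(1,2)] by blast
  show ?thesis using t B(3) by (intro exI[of _ "1/t"]) auto
qed

lemma gS_up: "0 < s \<Longrightarrow> sc (of_real (1/s)) y \<in> M \<Longrightarrow> s \<le> s' \<Longrightarrow> sc (of_real (1/s')) y \<in> M"
proof -
  assume s: "0 < s" "sc (of_real (1/s)) y \<in> M" "s \<le> s'"
  have "s/s' \<le> 1" "0 \<le> s/s'" using s by (auto simp: divide_le_eq)
  hence "norm (of_real (s/s') :: 'k) \<le> 1" by (simp only: norm_of_real abs_of_nonneg)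
  hence "sc (of_real (s/s')) (sc (of_real (1/s)) y) \<in> M" using D_bal s(2) by blast
  moreover have "(s/s') * (1/s) = 1/s'" using s by simp
  hence "(of_real (s/s') :: 'k) * of_real (1/s) = of_real (1/s')" by (simp only: of_real_mult[symmetric])
  ultimately show ?thesis by simp
qed

lemma gS_bdd: "bdd_below {t. 0 < t \<and> sc (of_real (1/t)) y \<in> M}"
  by (rule bdd_belowI[of _ 0]) auto

lemma g_nonneg: "0 \<le> gauge M y"
  unfolding gauge_def using gS_ne[of y] by (intro cInf_greatest) auto

lemma g_lower: "0 < s \<Longrightarrow> sc (of_real (1/s)) y \<in> M \<Longrightarrow> gauge M y \<le> s"
  unfolding gauge_def by (rule cInf_lower[OF _ gS_bdd]) auto

lemma g_lt: assumes "gauge M y < s" shows "sc (of_real (1/s)) y \<in> M"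
proof -
  have "\<exists>t\<in>{t. 0 < t \<and> sc (of_real (1/t)) y \<in> M}. t < s"
    using assms unfolding gauge_def by (intro cInf_lessD) (use gS_ne[of y] in auto)
  then obtain t where "0 < t" "sc (of_real (1/t)) y \<in> M" "t < s" by blast
  thus ?thesis using gS_up by auto
qed

lemma g_lt_pos: "gauge M y < s \<Longrightarrow> 0 < s" using g_nonneg[of y] by linarith

lemma g_le1: "y \<in> M \<Longrightarrow> gauge M y \<le> 1"
  using g_lower[of 1 y] by simp

lemma g_zero: "gauge M 0 = 0"
proof -
  have "{t. 0 < t \<and> sc (of_real (1/t)) 0 \<in> M} = {0<..}" using D_0 by auto
  thus ?thesis unfolding gauge_def by simp
qed

lemma g_hom_le: "gauge M (sc c y) \<le> norm c * gauge M y"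
proof (cases "c = 0")
  case True thus ?thesis by (simp add: g_zero)
next
  case False
  have "gauge M (sc c y) / norm c \<le> gauge M y"
  proof (rule dense_ge)
    fix s assume s: "gauge M y < s"
    have sp: "0 < s" using g_lt_pos[OF s] .
    have m: "sc (of_real (1/s)) y \<in> M" using g_lt[OF s] .
    define u where "u = c / of_real (norm c)"
    have nu: "norm u \<le> 1" using False by (simp add: u_def norm_divide)
    have "sc u (sc (of_real (1/s)) y) \<in> M" using D_bal[OF nu m] .
    moreover have "u * of_real (1/s) = of_real (1 / (norm c * s)) * c" using False
      by (simp add: u_def field_simps)
    ultimately have "sc (of_real (1 / (norm c * s))) (sc c y) \<in> M" by simp
    hence "gauge M (sc c y) \<le> norm c * s" using False sp by (intro g_lower) auto
    thus "gauge M (sc c y) / norm c \<le> s" using False by (simp add: divide_le_eq mult.commute)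
  qed
  thus ?thesis using False by (simp add: divide_le_eq mult.commute)
qed

lemma g_hom: "gauge M (sc c y) = norm c * gauge M y"
proof (cases "c = 0")
  case True thus ?thesis by (simp add: g_zero)
next
  case False
  have e: "gauge M y = gauge M (sc (inverse c) (sc c y))" using False by simp
  have "gauge M y \<le> norm (inverse c) * gauge M (sc c y)" by (subst e) (rule g_hom_le)
  hence "norm c * gauge M y \<le> norm c * (norm (inverse c) * gauge M (sc c y))"
    by (intro mult_left_mono) auto
  also have "\<dots> = gauge M (sc c y)" using False by (simp add: norm_inverse)
  finally have "norm c * gauge M y \<le> gauge M (sc c y)" .
  thus ?thesis using g_hom_le[of c y] by simp
qed

lemma g_tri: "gauge M (x + y) \<le> gauge M x + gauge M y"
proof -
  have key: "gauge M (x + y) \<le> s1 + s2" if s1: "gauge M x < s1" and s2: "gauge M y < s2" for s1 s2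
  proof -
    have p1: "0 < s1" "0 < s2" using g_lt_pos[OF s1] g_lt_pos[OF s2] by auto
    have m1: "sc (of_real (1/s1)) x \<in> M" using g_lt[OF s1] .
    have m2: "sc (of_real (1/s2)) y \<in> M" using g_lt[OF s2] .
    define t where "t = s1 / (s1 + s2)"
    have t: "0 \<le> t" "t \<le> 1" using p1 by (auto simp: t_def)
    have "sc (of_real t) (sc (of_real (1/s1)) x) + sc (of_real (1 - t)) (sc (of_real (1/s2)) y) \<in> M"
      using D_conv m1 m2 t unfolding convex_in_def by blast
    moreover have "(of_real t :: 'k) * of_real (1/s1) = of_real (1/(s1+s2))"
      using p1 by (simp add: t_def flip: of_real_mult)
    moreover have "1 - t = s2 / (s1 + s2)" using p1 by (simp add: t_def field_simps)
    hence "(of_real (1 - t) :: 'k) * of_real (1/s2) = of_real (1/(s1+s2))"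
      using p1 by (simp flip: of_real_mult)
    ultimately have "sc (of_real (1/(s1+s2))) (x + y) \<in> M" by (simp add: V.scale_right_distrib)
    thus ?thesis using p1 by (intro g_lower) auto
  qed
  have "gauge M (x + y) - gauge M y \<le> gauge M x"
  proof (rule dense_ge)
    fix s1 assume s1: "gauge M x < s1"
    have "gauge M (x + y) - s1 \<le> gauge M y"
    proof (rule dense_ge)
      fix s2 assume "gauge M y < s2"
      from key[OF s1 this] show "gauge M (x + y) - s1 \<le> s2" by linarith
    qed
    thus "gauge M (x + y) - gauge M y \<le> s1" by simp
  qed
  thus ?thesis by simp
qed

lemma g_rs: "0 \<le> t \<Longrightarrow> gauge M (sc (of_real t) y) = t * gauge M y"
  by (simp add: g_hom)

lemma g_neg: "gauge M (- y) = gauge M y"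
  using g_hom[of "-1" y] by simp

lemma g_diff_sym: "gauge M (x - y) = gauge M (y - x)"
  using g_neg[of "x - y"] by simp

end

end


definition rlin :: "(real \<Rightarrow> 'v::ab_group_add \<Rightarrow> 'v) \<Rightarrow> ('v \<Rightarrow> real) \<Rightarrow> bool" where
  "rlin rs u \<longleftrightarrow> (\<forall>x y. u (x + y) = u x + u y) \<and> (\<forall>t x. u (rs t x) = t * u x)"

primrec Hseq :: "(real \<Rightarrow> nat \<Rightarrow> real) \<Rightarrow> nat \<Rightarrow> real" where
  "Hseq g 0 = 0"
| "Hseq g (Suc n) = Hseq g n + g (Hseq g n) n"

lemma abs_suminf_le:
  fixes f g :: "nat \<Rightarrow> real"
  assumes fg: "\<And>i. \<bar>f i\<bar> \<le> g i" and g: "summable g"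
  shows "summable f" "\<bar>suminf f\<bar> \<le> suminf g"
proof -
  show sf: "summable f" by (rule summable_comparison_test'[OF g]) (use fg in auto)
  have "suminf f \<le> suminf g" by (rule suminf_le) (use fg sf g abs_le_D1 in auto)
  moreover have "suminf (\<lambda>i. - g i) \<le> suminf f"
    by (rule suminf_le) (use fg sf g summable_minus abs_le_D2 in \<open>auto simp: minus_le_iff\<close>)
  hence "- suminf g \<le> suminf f" using suminf_minus[OF g] by simp
  ultimately show "\<bar>suminf f\<bar> \<le> suminf g" by simp
qed

lemma geo4: "summable (\<lambda>i. (1/4::real)^i)" "(\<Sum>i. (1/4::real)^i) = 4/3"
  by (rule summable_geometric, simp) (subst suminf_geometric, simp_all)

lemma geo4c: "summable (\<lambda>i. Q * (1/4::real)^i)" "(\<Sum>i. Q * (1/4::real)^i) = Q * 4/3"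
  using summable_mult[OF geo4(1), of Q] suminf_mult[OF geo4(1), of Q] geo4(2) by simp_all

lemma hump:
  fixes rs :: "real \<Rightarrow> 'v::ab_group_add \<Rightarrow> 'v" and q :: "'v \<Rightarrow> real" and M :: "'v set"
  assumes HB: "\<And>y. \<exists>u. rlin rs u \<and> (\<forall>z. \<bar>u z\<bar> \<le> q z) \<and> u y = q y"
    and Hq: "\<And>u C. rlin rs u \<Longrightarrow> (\<forall>z. \<bar>u z\<bar> \<le> C * q z) \<Longrightarrow> \<exists>B. \<forall>y\<in>M. \<bar>u y\<bar> \<le> B"
    and S: "\<And>R. \<exists>y\<in>M. R \<le> q y"
  shows False
proof -
  define bd where "bd u = (SOME B. \<forall>y\<in>M. \<bar>u y\<bar> \<le> B)" for u :: "'v \<Rightarrow> real"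
  have bd: "\<forall>y\<in>M. \<bar>u y\<bar> \<le> bd u" if "rlin rs u" "\<forall>z. \<bar>u z\<bar> \<le> q z" for u
  proof -
    have "\<exists>B. \<forall>y\<in>M. \<bar>u y\<bar> \<le> B" using Hq[of u 1] that by simp
    thus ?thesis unfolding bd_def by (rule someI_ex)
  qed
  obtain y00 where y00: "y00 \<in> M" using S by blast
  define Y where "Y h n = (SOME y. y \<in> M \<and> 3 * 4^n * (real n + 1 + h) \<le> q y)" for h n
  have Y: "Y h n \<in> M \<and> 3 * 4^n * (real n + 1 + h) \<le> q (Y h n)" for h n
    unfolding Y_def by (rule someI_ex) (use S in blast)
  define U where "U h n = (SOME u. rlin rs u \<and> (\<forall>z. \<bar>u z\<bar> \<le> q z) \<and> u (Y h n) = q (Y h n))" for h n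
  have U: "rlin rs (U h n) \<and> (\<forall>z. \<bar>U h n z\<bar> \<le> q z) \<and> U h n (Y h n) = q (Y h n)" for h n
  proof -
    have "\<exists>u. rlin rs u \<and> (\<forall>z. \<bar>u z\<bar> \<le> q z) \<and> u (Y h n) = q (Y h n)" by (rule HB)
    thus ?thesis unfolding U_def by (rule someI_ex)
  qed
  define g where "g h n = bd (U h n) * (1/4)^n" for h n
  define H where "H = Hseq g"
  define u where "u n = U (H n) n" for n
  define y where "y n = Y (H n) n" for n
  have ul: "rlin rs (u n)" and ub: "\<And>z. \<bar>u n z\<bar> \<le> q z" and uy: "u n (y n) = q (y n)" for n
    using U[of "H n" n] by (auto simp: u_def y_def)
  have yM: "y n \<in> M" and yq: "3 * 4^n * (real n + 1 + H n) \<le> q (y n)" for n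
    using Y[of "H n" n] by (auto simp: y_def)
  have bdu: "\<forall>z\<in>M. \<bar>u n z\<bar> \<le> bd (u n)" for n
  proof -
    have "\<forall>z. \<bar>u n z\<bar> \<le> q z" using ub by blast
    thus ?thesis using bd[OF ul[of n]] by blast
  qed
  have bd0: "0 \<le> bd (u n)" for n using bdu[of n] y00 by fastforce
  have Hsum: "H n = (\<Sum>i<n. bd (u i) * (1/4)^i)" for n
    by (induction n) (simp_all add: H_def g_def u_def)
  have H0: "0 \<le> H n" for n unfolding Hsum by (intro sum_nonneg) (simp add: bd0)
  have qn: "0 \<le> q z" for z using ub[of 0 z] by linarith
  define f where "f z i = u i z * (1/4)^i" for z i
  have fb: "\<bar>f z i\<bar> \<le> q z * (1/4)^i" for z i
    unfolding f_def by (simp add: abs_mult ub mult_right_mono)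
  have fs: "summable (f z)" for z using abs_suminf_le(1)[OF fb geo4c(1)] .
  define V where "V z = suminf (f z)" for z
  have Vlin: "rlin rs V" unfolding rlin_def
  proof (intro conjI allI)
    fix a b
    have "f (a + b) = (\<lambda>i. f a i + f b i)"
      using ul unfolding rlin_def f_def by (auto simp: algebra_simps)
    thus "V (a + b) = V a + V b" unfolding V_def using suminf_add[OF fs fs] by simp
  next
    fix t a
    have "f (rs t a) = (\<lambda>i. t * f a i)"
      using ul unfolding rlin_def f_def by (auto simp: algebra_simps)
    thus "V (rs t a) = t * V a" unfolding V_def using suminf_mult[OF fs] by simp
  qed
  have Vb: "\<bar>V z\<bar> \<le> (4/3) * q z" for z
    using abs_suminf_le(2)[OF fb geo4c(1), of z] geo4c(2)[of "q z"] unfolding V_def by (simp add: mult.commute)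
  obtain B0 where B0: "\<forall>z\<in>M. \<bar>V z\<bar> \<le> B0" using Hq[OF Vlin, of "4/3"] Vb by blast
  have big: "real n + 1 \<le> V (y n)" for n
  proof -
    define z where "z = y n"
    have split: "V z = (\<Sum>m. f z (m + Suc n)) + (\<Sum>i<n. f z i) + f z n"
      unfolding V_def using suminf_split_initial_segment[OF fs, of z "Suc n"] by simp
    have "\<bar>\<Sum>i<n. f z i\<bar> \<le> (\<Sum>i<n. \<bar>f z i\<bar>)" by (rule sum_abs)
    also have "\<dots> \<le> (\<Sum>i<n. bd (u i) * (1/4)^i)"
      using bdu yM unfolding f_def z_def by (intro sum_mono) (simp add: abs_mult mult_right_mono)
    finally have head: "\<bar>\<Sum>i<n. f z i\<bar> \<le> H n" by (simp add: Hsum)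
    have tb: "\<bar>f z (m + Suc n)\<bar> \<le> (q z * (1/4)^Suc n) * (1/4)^m" for m
      using fb[of z "m + Suc n"] by (simp add: power_add mult_ac)
    have "\<bar>\<Sum>m. f z (m + Suc n)\<bar> \<le> (\<Sum>m. (q z * (1/4)^Suc n) * (1/4)^m)"
      by (rule abs_suminf_le(2)[OF tb geo4c(1)])
    also have "\<dots> = q z * (1/4)^n / 3" using geo4c(2)[of "q z * (1/4)^Suc n"] by simp
    finally have tail: "\<bar>\<Sum>m. f z (m + Suc n)\<bar> \<le> q z * (1/4)^n / 3" .
    have mid: "f z n = q z * (1/4)^n" unfolding f_def z_def using uy by simp
    have "V z \<ge> q z * (1/4)^n - q z * (1/4)^n / 3 - H n"
      using split head tail mid by linarith
    moreover have "3 * (real n + 1 + H n) \<le> q z * (1/4)^n"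
    proof -
      have "3 * 4^n * (real n + 1 + H n) * (1/4)^n \<le> q z * (1/4)^n"
        using yq[of n] unfolding z_def by (intro mult_right_mono) auto
      moreover have "(4::real)^n * (1/4)^n = 1" by (simp add: power_mult_distrib[symmetric])
      hence "3 * 4^n * (real n + 1 + H n) * (1/4)^n = 3 * (real n + 1 + H n)"
        by (metis (no_types, lifting) mult.assoc mult.commute mult.right_neutral)
      ultimately show ?thesis by simp
    qed
    moreover have "0 \<le> real n" by simp
    moreover have ar: "N + 1 \<le> W" if "A - A/3 - HH \<le> W" "3*(N+1+HH) \<le> A" "0 \<le> N" "0 \<le> HH" for A W HH N :: real
      using that by argo
    ultimately have "real n + 1 \<le> V z" using H0[of n] by blast
    thus ?thesis unfolding z_def .
  qed
  obtain n :: nat where "B0 < real n" using reals_Archimedean2 by blast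
  moreover have "\<bar>V (y n)\<bar> \<le> B0" using B0 yM by blast
  ultimately show False using big[of n] by linarith
qed


lemma istop_norm: fixes N :: "'a::ab_group_add \<Rightarrow> real" shows "istopology (\<lambda>U. \<forall>x\<in>U. \<exists>e>0. \<forall>y. N (y - x) < e \<longrightarrow> y \<in> U)"
  unfolding istopology_def
proof (intro conjI allI impI)
  fix S T assume S: "\<forall>x\<in>S. \<exists>e>0. \<forall>y. N (y - x) < e \<longrightarrow> y \<in> S" and T: "\<forall>x\<in>T. \<exists>e>0. \<forall>y. N (y - x) < e \<longrightarrow> y \<in> T"
  show "\<forall>x\<in>S \<inter> T. \<exists>e>0. \<forall>y. N (y - x) < e \<longrightarrow> y \<in> S \<inter> T"
  proof
    fix x assume "x \<in> S \<inter> T"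
    then obtain e1 e2 where "e1 > 0" "\<forall>y. N (y - x) < e1 \<longrightarrow> y \<in> S" "e2 > 0" "\<forall>y. N (y - x) < e2 \<longrightarrow> y \<in> T"
      using S T by blast
    thus "\<exists>e>0. \<forall>y. N (y - x) < e \<longrightarrow> y \<in> S \<inter> T" by (intro exI[of _ "min e1 e2"]) auto
  qed
next
  fix K :: "'a set set" assume K: "\<forall>K\<in>K. \<forall>x\<in>K. \<exists>e>0. \<forall>y. N (y - x) < e \<longrightarrow> y \<in> K"
  show "\<forall>x\<in>\<Union>K. \<exists>e>0. \<forall>y. N (y - x) < e \<longrightarrow> y \<in> \<Union>K"
  proof
    fix x assume "x \<in> \<Union>K"
    then obtain A where "A \<in> K" "x \<in> A" by blast
    then obtain e where "e > 0" "\<forall>y. N (y - x) < e \<longrightarrow> y \<in> A" using K by blast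
    thus "\<exists>e>0. \<forall>y. N (y - x) < e \<longrightarrow> y \<in> \<Union>K" using \<open>A \<in> K\<close> by blast
  qed
qed

context lcs_loc
begin

interpretation V: vector_space sc by (rule vs)

lemma cont_of_bound:
  assumes D: "disk M" and lin: "Vector_Spaces.linear sc (*) f"
    and bnd: "\<And>z. norm (f z) \<le> C * gauge M z"
  shows "continuous_map T euclidean f"
  unfolding continuous_map_def
proof (intro conjI allI impI)
  show "f \<in> topspace T \<rightarrow> topspace euclidean" by simp
next
  fix U :: "'k set" assume "openin euclidean U"
  hence U: "open U" by simp
  have fadd: "f (a + b) = f a + f b" for a b using lin unfolding Vector_Spaces.linear_iff by blast
  have fdiff: "f (z - z0) = f z - f z0" for z z0
  proof -
    have "f z = f ((z - z0) + z0)" by simp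
    also have "\<dots> = f (z - z0) + f z0" by (rule fadd)
    finally show ?thesis by simp
  qed
  show "openin T {x \<in> topspace T. f x \<in> U}"
  proof (subst openin_subopen, intro ballI)
    fix z0 assume "z0 \<in> {x \<in> topspace T. f x \<in> U}"
    hence "f z0 \<in> U" by simp
    then obtain \<epsilon> where \<epsilon>: "\<epsilon> > 0" "ball (f z0) \<epsilon> \<subseteq> U" using U open_contains_ball by blast
    obtain B where B: "openin T B" "0 \<in> B" "B \<subseteq> M" using D_B[OF D] by blast
    define C' where "C' = \<bar>C\<bar> + 1"
    have C': "0 < C'" unfolding C'_def by simp
    define k where "k = 2 * C' / \<epsilon>"
    have k: "0 < k" using C' \<epsilon> by (simp add: k_def)
    define N0 where "N0 = {z. sc (of_real k) (z - z0) \<in> B}"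
    have "openin T N0" unfolding N0_def by (rule open_pre[OF B(1)])
    moreover have "z0 \<in> N0" using B(2) by (simp add: N0_def)
    moreover have "N0 \<subseteq> {x \<in> topspace T. f x \<in> U}"
    proof
      fix z assume "z \<in> N0"
      hence "sc (of_real k) (z - z0) \<in> M" using B(3) by (auto simp: N0_def)
      hence "gauge M (sc (of_real k) (z - z0)) \<le> 1" by (rule g_le1[OF D])
      hence "k * gauge M (z - z0) \<le> 1" using g_rs[OF D, of k] k by simp
      hence g: "gauge M (z - z0) \<le> \<epsilon> / (2 * C')" using k C' \<epsilon> by (simp add: k_def field_simps)
      have g0: "0 \<le> gauge M (z - z0)" by (rule g_nonneg[OF D])
      have "norm (f z - f z0) \<le> C * gauge M (z - z0)" using bnd[of "z - z0"] by (simp add: fdiff)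
      also have "\<dots> \<le> C' * gauge M (z - z0)" using g0 by (intro mult_right_mono) (auto simp: C'_def)
      also have "\<dots> \<le> C' * (\<epsilon> / (2 * C'))" using g C' by (intro mult_left_mono) auto
      also have "\<dots> < \<epsilon>" using C' \<epsilon> by simp
      finally have "f z \<in> ball (f z0) \<epsilon>" by (simp add: dist_norm norm_minus_commute)
      thus "z \<in> {x \<in> topspace T. f x \<in> U}" using \<epsilon>(2) topT by auto
    qed
    ultimately show "\<exists>T'. openin T T' \<and> z0 \<in> T' \<and> T' \<subseteq> {x \<in> topspace T. f x \<in> U}" by blast
  qed
qed

lemma normable_of_bdd:
  assumes D: "disk M"
    and bdd: "\<And>W. openin T W \<Longrightarrow> 0 \<in> W \<Longrightarrow> \<exists>t>0. \<forall>y\<in>M. sc (of_real t) y \<in> W"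
  shows "normable sc T"
proof -
  define N where "N = gauge M"
  have pos: "x = 0" if "N x = 0" for x
  proof (rule ccontr)
    assume x: "x \<noteq> 0"
    have "\<exists>U V. openin T U \<and> openin T V \<and> 0 \<in> U \<and> x \<in> V \<and> disjnt U V"
      using haus x unfolding Hausdorff_space_def topT by simp
    then obtain U V where UV: "openin T U" "openin T V" "0 \<in> U" "x \<in> V" "disjnt U V"
      by blast
    obtain t where t: "t > 0" "\<forall>y\<in>M. sc (of_real t) y \<in> U" using bdd[OF UV(1,3)] by blast
    have "gauge M x < t" using that t unfolding N_def by simp
    hence "sc (of_real (1/t)) x \<in> M" by (rule g_lt[OF D])
    hence "sc (of_real t) (sc (of_real (1/t)) x) \<in> U" using t by blast
    hence "x \<in> U" using t by simp
    thus False using UV(4,5) by (auto simp: disjnt_def)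
  qed
  have isn: "is_norm sc N" unfolding is_norm_def
  proof (intro conjI allI impI)
    fix x show "0 \<le> N x" unfolding N_def by (rule g_nonneg[OF D])
  next
    fix x assume "N x = 0" thus "x = 0" by (rule pos)
  next
    fix c x show "N (sc c x) = norm c * N x" unfolding N_def by (rule g_hom[OF D])
  next
    fix x y show "N (x + y) \<le> N x + N y" unfolding N_def by (rule g_tri[OF D])
  qed
  have "T = norm_topology N"
    unfolding norm_topology_def topology_eq topology_inverse'[OF istop_norm]
  proof (intro allI iffI)
    fix S assume S: "openin T S"
    show "\<forall>x\<in>S. \<exists>e>0. \<forall>y. N (y - x) < e \<longrightarrow> y \<in> S"
    proof
      fix x assume x: "x \<in> S"
      define W where "W = {z. sc 1 (z - (- x)) \<in> S}"
      have Wo: "openin T W" unfolding W_def by (rule open_pre[OF S])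
      have W0: "0 \<in> W" using x by (simp add: W_def)
      obtain t where t: "t > 0" "\<forall>y\<in>M. sc (of_real t) y \<in> W" using bdd[OF Wo W0] by blast
      show "\<exists>e>0. \<forall>y. N (y - x) < e \<longrightarrow> y \<in> S"
      proof (intro exI[of _ t] conjI allI impI)
        fix y assume "N (y - x) < t"
        hence "sc (of_real (1/t)) (y - x) \<in> M" unfolding N_def by (rule g_lt[OF D])
        hence "sc (of_real t) (sc (of_real (1/t)) (y - x)) \<in> W" using t by blast
        hence "y - x \<in> W" using t by simp
        thus "y \<in> S" by (simp add: W_def)
      qed (use t in simp)
    qed
  next
    fix S assume S: "\<forall>x\<in>S. \<exists>e>0. \<forall>y. N (y - x) < e \<longrightarrow> y \<in> S"
    obtain B where B: "openin T B" "0 \<in> B" "B \<subseteq> M" using D_B[OF D] by blast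
    show "openin T S"
    proof (subst openin_subopen, intro ballI)
      fix x assume "x \<in> S"
      then obtain e where e: "e > 0" "\<forall>y. N (y - x) < e \<longrightarrow> y \<in> S" using S by blast
      define U where "U = {z. sc (of_real (2/e)) (z - x) \<in> B}"
      have "openin T U" unfolding U_def by (rule open_pre[OF B(1)])
      moreover have "x \<in> U" using B(2) by (simp add: U_def)
      moreover have "U \<subseteq> S"
      proof
        fix z assume "z \<in> U"
        hence "sc (of_real (2/e)) (z - x) \<in> M" using B(3) by (auto simp: U_def)
        hence "gauge M (sc (of_real (2/e)) (z - x)) \<le> 1" by (rule g_le1[OF D])
        hence "(2/e) * N (z - x) \<le> 1" using g_rs[OF D, of "2/e"] e unfolding N_def by simp
        hence "N (z - x) \<le> e/2" using e by (simp add: field_simps)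
        hence "N (z - x) < e" using e by simp
        thus "z \<in> S" using e by blast
      qed
      ultimately show "\<exists>T'. openin T T' \<and> x \<in> T' \<and> T' \<subseteq> S" by blast
    qed
  qed
  with isn show ?thesis unfolding normable_def by blast
qed


lemma bdd_of_weak:
  assumes D: "disk M"
    and wb: "\<And>f. Vector_Spaces.linear sc (*) f \<Longrightarrow> continuous_map T euclidean f \<Longrightarrow> \<exists>Bd. \<forall>y\<in>M. norm (f y) \<le> Bd"
    and W: "openin T W" "0 \<in> W"
  shows "\<exists>t>0. \<forall>y\<in>M. sc (of_real t) y \<in> W"
proof (rule ccontr)
  assume nt: "\<not> (\<exists>t>0. \<forall>y\<in>M. sc (of_real t) y \<in> W)"
  obtain W' where W': "openin T W'" "convex_in (+) sc W'" "0 \<in> W'" "W' \<subseteq> W"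
    using loc_convex[OF W] by blast
  obtain M' where M': "disk M'" "M' \<subseteq> W'" using bal_core[OF W'(1,3,2)] by blast
  define q where "q = gauge M'"
  have S: "\<exists>y\<in>M. R \<le> q y" for R
  proof (rule ccontr)
    assume "\<not> (\<exists>y\<in>M. R \<le> q y)"
    hence lt: "\<forall>y\<in>M. q y < R" by auto
    have "q 0 < R" using lt D_0[OF D] by blast
    hence Rp: "0 < R" using g_zero[OF M'(1)] by (simp add: q_def)
    have "\<forall>y\<in>M. sc (of_real (1/R)) y \<in> W"
    proof
      fix y assume y: "y \<in> M"
      have "q (sc (of_real (1/R)) y) = (1/R) * q y" using g_rs[OF M'(1), of "1/R" y] Rp by (simp add: q_def)
      also have "\<dots> < 1" using lt y Rp by (simp add: field_simps)
      finally have "gauge M' (sc (of_real (1/R)) y) < 1" by (simp add: q_def)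
      hence "sc (of_real (1/1)) (sc (of_real (1/R)) y) \<in> M'" by (rule g_lt[OF M'(1)])
      thus "sc (of_real (1/R)) y \<in> W" using M'(2) W'(4) by auto
    qed
    moreover have "0 < 1/R" using Rp by simp
    ultimately show False using nt by blast
  qed
  define rs where "rs t x = sc (of_real t) x" for t x
  have HBq: "\<exists>u. rlin rs u \<and> (\<forall>z. \<bar>u z\<bar> \<le> q z) \<and> u y = q y" for y
  proof -
    interpret H: hb_setup sc q
      by unfold_locales (use vs g_tri[OF M'(1)] g_rs[OF M'(1)] in \<open>auto simp: q_def\<close>)
    obtain u where u: "\<forall>x y. u (x+y) = u x + u y" "\<forall>t x. u (sc (of_real t) x) = t * u x" "\<forall>x. u x \<le> q x" "u y = q y"
      using H.HB_exists[of y] by blast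
    have "\<bar>u z\<bar> \<le> q z" for z
    proof -
      have "u (-z) = - u z" using u(2)[rule_format, of "-1" z] by simp
      moreover have "q (-z) = q z" using g_neg[OF M'(1)] by (simp add: q_def)
      ultimately show ?thesis using u(3)[rule_format, of z] u(3)[rule_format, of "-z"] by linarith
    qed
    thus ?thesis using u unfolding rlin_def rs_def by blast
  qed
  have Hq: "\<exists>B. \<forall>y\<in>M. \<bar>u y\<bar> \<le> B" if ul: "rlin rs u" and ub: "\<forall>z. \<bar>u z\<bar> \<le> C * q z" for u C
  proof -
    have ua: "\<And>x y. u (x + y) = u x + u y" and us: "\<And>t x. u (sc (of_real t) x) = t * u x"
      using ul unfolding rlin_def rs_def by auto
    have lin: "Vector_Spaces.linear sc (*) (cx sc u)" by (rule cx_linear[OF vs ua us])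
    have bnd: "norm (cx sc u z) \<le> C * gauge M' z" for z
    proof -
      obtain c where c: "norm c = 1" "norm (cx sc u z) = u (sc c z)" using cx_norm[OF vs ua us] by blast
      have "u (sc c z) \<le> C * q (sc c z)" using ub by (meson abs_le_D1)
      also have "q (sc c z) = q z" using g_hom[OF M'(1)] c(1) by (simp add: q_def)
      finally show ?thesis using c(2) by (simp add: q_def)
    qed
    have "continuous_map T euclidean (cx sc u)" by (rule cont_of_bound[OF M'(1) lin bnd])
    then obtain Bd where Bd: "\<forall>y\<in>M. norm (cx sc u y) \<le> Bd" using wb[OF lin] by blast
    have "\<bar>u y\<bar> \<le> Bd" if "y \<in> M" for y
    proof -
      have "\<bar>u y\<bar> = \<bar>kre (cx sc u y)\<bar>" by (simp add: cx_re)
      also have "\<dots> \<le> norm (cx sc u y)" by (rule kre_abs)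
      also have "\<dots> \<le> Bd" using Bd that by blast
      finally show ?thesis .
    qed
    thus ?thesis by blast
  qed
  show False by (rule hump[of rs q M, OF HBq Hq S])
qed

end


theorem mainTheorem5:
  fixes sE :: "'k::real_normed_field \<Rightarrow> 'e::ab_group_add \<Rightarrow> 'e"
    and sF :: "'k \<Rightarrow> 'f::ab_group_add \<Rightarrow> 'f"
    and sG :: "'k \<Rightarrow> 'g::ab_group_add \<Rightarrow> 'g"
    and TE :: "'e topology" and TF :: "'f topology" and TG :: "'g topology"
    and T1 :: "('f \<Rightarrow> 'g) topology" and T2 :: "('e \<Rightarrow> 'f) topology"
    and T3 :: "('e \<Rightarrow> 'g) topology"
  assumes E: "lcs sE TE" and F: "lcs sF TF" and G: "lcs sG TG"
    and F_nonnormable: "\<not> normable sF TF"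
    and E_nontriv: "\<exists>x::'e. x \<noteq> 0" and G_nontriv: "\<exists>y::'g. y \<noteq> 0"
    and T1: "lc_vector_topology (cont_lin sF TF sG TG) fadd (fscale sG) T1"
    and T2: "lc_vector_topology (cont_lin sE TE sF TF) fadd (fscale sF) T2"
    and T3: "lc_vector_topology (cont_lin sE TE sG TG) fadd (fscale sG) T3"
    and cont: "\<exists>l\<in>dual sE TE. \<exists>x. l x \<noteq> 0 \<and>
                 continuous_map TF T2 (\<lambda>y. \<lambda>z. sF (l z) y) \<and>
                 continuous_map T3 TG (\<lambda>A. A x)"
  shows "\<not> continuous_map (prod_topology T1 T2) T3 (\<lambda>(A, B). A \<circ> B)"
proof
  assume Cmp: "continuous_map (prod_topology T1 T2) T3 (\<lambda>(A, B). A \<circ> B)"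
  interpret Fl: lcs_loc sF TF by unfold_locales (rule F)
  interpret Gl: lcs_loc sG TG by unfold_locales (rule G)
  interpret VF: vector_space sF by (rule Fl.vs)
  interpret VG: vector_space sG by (rule Gl.vs)
  obtain l x0 where l: "l \<in> dual sE TE" "l x0 \<noteq> 0"
    and Tens: "continuous_map TF T2 (\<lambda>y. \<lambda>z. sF (l z) y)"
    and Ev: "continuous_map T3 TG (\<lambda>A. A x0)" using cont by blast
  have top1: "topspace T1 = cont_lin sF TF sG TG" using T1 by (simp add: lc_vector_topology_def)
  have sc1: "continuous_map (prod_topology (euclidean :: 'k topology) T1) T1 (\<lambda>(c, A). fscale sG c A)"
    using T1 by (simp add: lc_vector_topology_def)
  define c0 where "c0 = inverse (l x0)"
  have EvC: "continuous_map (prod_topology T1 TF) TG (\<lambda>(A, y). A y)"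
  proof -
    have s: "continuous_map (prod_topology T1 TF) TF (\<lambda>p. sF c0 (snd p))"
      using continuous_map_compose[OF continuous_map_snd Fl.cont_scale[of c0]] by (simp add: o_def)
    have t: "continuous_map (prod_topology T1 TF) T2 (\<lambda>p. \<lambda>z. sF (l z) (sF c0 (snd p)))"
      using continuous_map_compose[OF s Tens] by (simp add: o_def)
    have h1: "continuous_map (prod_topology T1 TF) (prod_topology T1 T2) (\<lambda>p. (fst p, \<lambda>z. sF (l z) (sF c0 (snd p))))"
      by (intro continuous_map_pairedI continuous_map_fst t)
    have h2: "continuous_map (prod_topology T1 TF) TG (\<lambda>p. ((\<lambda>(A, B). A \<circ> B) (fst p, \<lambda>z. sF (l z) (sF c0 (snd p)))) x0)"
      using continuous_map_compose[OF continuous_map_compose[OF h1 Cmp] Ev] by (simp add: o_def)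
    show ?thesis
    proof (rule continuous_map_eq[OF h2])
      fix p :: "('f \<Rightarrow> 'g) \<times> 'f"
      obtain A y where p: "p = (A, y)" by fastforce
      have "sF (l x0) (sF c0 y) = y" using l(2) by (simp add: c0_def)
      thus "((\<lambda>(A, B). A \<circ> B) (fst p, \<lambda>z. sF (l z) (sF c0 (snd p)))) x0 = (\<lambda>(A, y). A y) p"
        by (simp add: p)
    qed
  qed
  obtain g :: 'g where g: "g \<noteq> 0" using G_nontriv by blast
  have "\<exists>U V. openin TG U \<and> openin TG V \<and> 0 \<in> U \<and> g \<in> V \<and> disjnt U V"
    using Gl.haus g unfolding Hausdorff_space_def Gl.topT by simp
  then obtain V0 V1 where V0: "openin TG V0" "0 \<in> V0" "g \<notin> V0"
    using disjnt_iff by metis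
  define zf :: "'f \<Rightarrow> 'g" where "zf = (\<lambda>_. 0)"
  have zf: "zf \<in> cont_lin sF TF sG TG"
    unfolding cont_lin_def Vector_Spaces.linear_iff zf_def using Fl.vs Gl.vs by (simp add: Gl.topT)
  define P where "P = {p \<in> topspace (prod_topology T1 TF). (\<lambda>(A, y). A y) p \<in> V0}"
  have Po: "openin (prod_topology T1 TF) P" unfolding P_def by (rule openin_continuous_map_preimage[OF EvC V0(1)])
  have P0: "(zf, 0) \<in> P" using zf V0(2) by (simp add: P_def top1 Fl.topT zf_def)
  obtain W U0 where WU: "openin T1 W" "openin TF U0" "zf \<in> W" "0 \<in> U0" "W \<times> U0 \<subseteq> P"
    using Po[unfolded openin_prod_topology_alt, rule_format, OF P0] by blast
  have WU2: "A y \<in> V0" if "A \<in> W" "y \<in> U0" for A y using WU(5) that by (auto simp: P_def)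
  obtain U where U: "openin TF U" "convex_in (+) sF U" "0 \<in> U" "U \<subseteq> U0"
    using Fl.loc_convex[OF WU(2,4)] by blast
  obtain M where M: "Fl.disk M" "M \<subseteq> U" using Fl.bal_core[OF U(1,3,2)] by blast
  have wb: "\<exists>Bd. \<forall>y\<in>M. norm (f y) \<le> Bd"
    if fl: "Vector_Spaces.linear sF (*) f" and fc: "continuous_map TF euclidean f" for f
  proof -
    define Af where "Af = (\<lambda>y. sG (f y) g)"
    have fadd: "f (x + y) = f x + f y" and fsc: "f (sF c x) = c * f x" for x y c
      using fl unfolding Vector_Spaces.linear_iff by auto
    have Aflin: "Vector_Spaces.linear sF sG Af"
      unfolding Vector_Spaces.linear_iff Af_def
      using Fl.vs Gl.vs by (simp add: fadd fsc VG.scale_left_distrib)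
    have Afc: "continuous_map TF TG Af"
      using continuous_map_compose[OF fc Gl.cont_scalar[of g]] by (simp add: o_def Af_def)
    have Af1: "Af \<in> topspace T1" using Aflin Afc by (simp add: top1 cont_lin_def)
    have cm: "continuous_map euclidean T1 (\<lambda>c::'k. fscale sG c Af)"
    proof -
      have "continuous_map euclidean (prod_topology euclidean T1) (\<lambda>c::'k. (c, Af))"
        by (intro continuous_map_pairedI) (auto simp: Af1)
      from continuous_map_compose[OF this sc1] show ?thesis by (simp add: o_def)
    qed
    have "openin euclidean {c \<in> topspace euclidean. fscale sG c Af \<in> W}"
      by (rule openin_continuous_map_preimage[OF cm WU(1)])
    hence op: "open {c::'k. fscale sG c Af \<in> W}" by simp
    have "fscale sG 0 Af = zf" by (simp add: fscale_def zf_def)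
    hence "(0::'k) \<in> {c. fscale sG c Af \<in> W}" using WU(3) by simp
    then obtain \<delta> where \<delta>: "\<delta> > 0" "ball 0 \<delta> \<subseteq> {c::'k. fscale sG c Af \<in> W}"
      using op open_contains_ball by blast
    have "norm (f y) \<le> 1 / \<delta>" if y: "y \<in> M" for y
    proof (rule ccontr)
      assume "\<not> norm (f y) \<le> 1 / \<delta>"
      hence big: "1 / \<delta> < norm (f y)" by simp
      hence fy0: "f y \<noteq> 0" using \<delta> by (auto simp: not_less)
      define c where "c = inverse (f y)"
      have Np: "0 < norm (f y)" using fy0 by simp
      have "1 < \<delta> * norm (f y)" using big \<delta> by (simp add: field_simps)
      hence "1 / norm (f y) < \<delta>" using Np by (simp add: divide_less_eq mult.commute)
      moreover have "norm c = 1 / norm (f y)" by (simp add: c_def norm_inverse divide_inverse)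
      ultimately have "norm c < \<delta>" by simp
      hence "fscale sG c Af \<in> W" using \<delta>(2) by auto
      moreover have "y \<in> U0" using y M(2) U(4) by blast
      ultimately have "fscale sG c Af y \<in> V0" by (rule WU2)
      moreover have "fscale sG c Af y = g" using fy0 by (simp add: fscale_def Af_def c_def)
      ultimately show False using V0(3) by simp
    qed
    thus ?thesis by blast
  qed
  have bdd: "\<exists>t>0. \<forall>y\<in>M. sF (of_real t) y \<in> W'" if "openin TF W'" "0 \<in> W'" for W'
    by (rule Fl.bdd_of_weak[OF M(1) wb that])
  have "normable sF TF" by (rule Fl.normable_of_bdd[OF M(1) bdd])
  with F_nonnormable show False by contradiction
qed


end
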